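(* Let $\mathbb{K}=\mathbb{R}$ or $\mathbb{C}$, let $V,W$ be finite-dimensional $\mathbb{K}$-vector spaces, and let $A(\xi):V\to W$, $\xi\in\mathbb{K}^d$, be a homogeneous symbol of degree $k$ (a $\operatorname{Lin}(V,W)$-valued map whose matrix entries are homogeneous polynomials of degree $k$ in $\xi$ with coefficients in $\mathbb{K}$). The following are equivalent: (1) there is an integer $r$ such that $\operatorname{rank}_{\mathbb K}A(\xi)=r$ for all $\xi\in\mathbb{K}^d\setminus\{0\}$; (2) there exist finite-dimensional $\mathbb{K}$-vector spaces $U,X$ and homogeneous symbols $B(\xi):U\to V$ and $Q(\xi):W\to X$ on $\mathbb{K}^d$ such that $\operatorname{im}B(\xi)=\ker A(\xi)$ and $\operatorname{im}A(\xi)=\ker Q(\xi)$ for all $\xi\in\mathbb{K}^d\setminus\{0\}$. Moreover, if (1) holds, then in (2) one can always take $B(\xi)$ and $Q(\xi)$ homogeneous of order $rk$. *)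

theory Defs
  imports Complex_Main "Jordan_Normal_Form.DL_Rank" "Jordan_Normal_Form.Matrix_Kernel"
begin

text \<open>Points of K^d are represented as functions xi :: nat => K; only the
 coordinates xi 0, ..., xi (d-1) are used.  Multi-indices alpha are functions
 nat => nat vanishing outside {0..<d}.\<close>

definition monomials_deg :: "nat \<Rightarrow> nat \<Rightarrow> (nat \<Rightarrow> nat) set" where
  "monomials_deg d k = {\<alpha>. (\<forall>i. d \<le> i \<longrightarrow> \<alpha> i = 0) \<and> (\<Sum>i<d. \<alpha> i) = k}"

definition hom_poly_fun :: "nat \<Rightarrow> nat \<Rightarrow> ((nat \<Rightarrow> 'a::comm_ring_1) \<Rightarrow> 'a) \<Rightarrow> bool" where
  "hom_poly_fun d k f \<longleftrightarrow>
     (\<exists>c :: (nat \<Rightarrow> nat) \<Rightarrow> 'a. \<forall>\<xi>. f \<xi> = (\<Sum>\<alpha>\<in>monomials_deg d k. c \<alpha> * (\<Prod>i<d. \<xi> i ^ \<alpha> i)))"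

definition hom_symbol :: "nat \<Rightarrow> nat \<Rightarrow> nat \<Rightarrow> nat \<Rightarrow> ((nat \<Rightarrow> 'a::comm_ring_1) \<Rightarrow> 'a mat) \<Rightarrow> bool" where
  "hom_symbol d k m n A \<longleftrightarrow>
     (\<forall>\<xi>. A \<xi> \<in> carrier_mat m n) \<and> (\<forall>i<m. \<forall>j<n. hom_poly_fun d k (\<lambda>\<xi>. A \<xi> $$ (i, j)))"

definition mat_image :: "'a::comm_ring_1 mat \<Rightarrow> 'a vec set" where
  "mat_image A = {A *\<^sub>v u | u. u \<in> carrier_vec (dim_col A)}"

definition nonzero_pt :: "nat \<Rightarrow> (nat \<Rightarrow> 'a::zero) \<Rightarrow> bool" where
  "nonzero_pt d \<xi> \<longleftrightarrow> (\<exists>i<d. \<xi> i \<noteq> 0)"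

end

theory Submission
  imports Defs
begin


definition minor :: "'a::comm_ring_1 mat \<Rightarrow> (nat \<Rightarrow> nat) \<Rightarrow> (nat \<Rightarrow> nat) \<Rightarrow> nat \<Rightarrow> 'a" where
  "minor M f g s = det (mat s s (\<lambda>(i,j). M $$ (f i, g j)))"

definition inr :: "'a mat \<Rightarrow> (nat \<Rightarrow> nat) \<Rightarrow> (nat \<Rightarrow> nat) \<Rightarrow> nat \<Rightarrow> bool" where
  "inr M f g s \<longleftrightarrow> (\<forall>i<s. f i < dim_row M) \<and> (\<forall>j<s. g j < dim_col M)"

definition cons_i :: "nat \<Rightarrow> (nat \<Rightarrow> nat) \<Rightarrow> nat \<Rightarrow> nat" where
  "cons_i i f = (\<lambda>a. if a = 0 then i else f (a - 1))"

definition snoc_i :: "nat \<Rightarrow> (nat \<Rightarrow> nat) \<Rightarrow> nat \<Rightarrow> nat \<Rightarrow> nat" where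
  "snoc_i r g l = (\<lambda>b. if b < r then g b else l)"

lemma minor_inj:
  assumes "minor M f g s \<noteq> 0"
  shows "inj_on f {..<s}" "inj_on g {..<s}"
proof -
  let ?S = "mat s s (\<lambda>(i,j). M $$ (f i, g j))"
  have S: "?S \<in> carrier_mat s s" by simp
  show "inj_on f {..<s}"
  proof (rule inj_onI, rule ccontr)
    fix i j assume ij: "i \<in> {..<s}" "j \<in> {..<s}" "f i = f j" "i \<noteq> j"
    have r: "row ?S i = row ?S j" using ij by (intro eq_vecI) auto
    have "det ?S = 0" by (rule det_identical_rows[OF S \<open>i \<noteq> j\<close> _ _ r]) (use ij in auto)
    then show False using assms unfolding minor_def by simp
  qed
  show "inj_on g {..<s}"
  proof (rule inj_onI, rule ccontr)
    fix i j assume ij: "i \<in> {..<s}" "j \<in> {..<s}" "g i = g j" "i \<noteq> j"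
    have r: "col ?S i = col ?S j" using ij by (intro eq_vecI) auto
    have "det ?S = 0" by (rule det_identical_columns[OF S \<open>i \<noteq> j\<close> _ _ r]) (use ij in auto)
    then show False using assms unfolding minor_def by simp
  qed
qed

lemma cramer_col:
  fixes M :: "'a::field mat"
  assumes M: "M \<in> carrier_mat n N" and inr: "inr M f0 g0 r" and nz: "minor M f0 g0 r \<noteq> 0"
    and l: "l < N"
    and z: "\<And>i. i < n \<Longrightarrow> minor M (cons_i i f0) (snoc_i r g0 l) (Suc r) = 0"
  shows "\<exists>c. \<forall>i<n. M $$ (i, l) = (\<Sum>k<r. c k * M $$ (i, g0 k))"
proof -
  define Ni where "Ni i = mat (Suc r) (Suc r) (\<lambda>(a,b). M $$ (cons_i i f0 a, snoc_i r g0 l b))" for i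
  have Nc: "Ni i \<in> carrier_mat (Suc r) (Suc r)" for i unfolding Ni_def by simp
  have del: "mat_delete (Ni i) 0 b = mat_delete (Ni 0) 0 b" if "b < Suc r" for i b
    unfolding mat_delete_def Ni_def by (intro eq_matI) (auto simp: cons_i_def)
  define D where "D b = cofactor (Ni 0) 0 b" for b
  have cof: "cofactor (Ni i) 0 b = D b" if "b < Suc r" for i b
    unfolding D_def cofactor_def by (subst del[OF that, of i]) (rule refl)
  have delr: "mat_delete (Ni i) 0 r = mat r r (\<lambda>(i,j). M $$ (f0 i, g0 j))" for i
    unfolding mat_delete_def Ni_def by (intro eq_matI) (auto simp: cons_i_def snoc_i_def)
  define E where "E = (-1)^r * minor M f0 g0 r"
  have E: "E \<noteq> 0" unfolding E_def using nz by simp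
  have Dr: "D r = E" using cof[of r 0] delr[of 0] unfolding cofactor_def E_def minor_def by simp
  have key: "M $$ (i, l) = (\<Sum>k<r. (- D k / E) * M $$ (i, g0 k))" if i: "i < n" for i
  proof -
    have "0 = det (Ni i)" using z[OF i] unfolding minor_def Ni_def by simp
    also have "\<dots> = (\<Sum>b<Suc r. Ni i $$ (0,b) * cofactor (Ni i) 0 b)"
      by (rule laplace_expansion_row[OF Nc]) simp
    also have "\<dots> = (\<Sum>b<Suc r. Ni i $$ (0,b) * D b)"
      by (rule sum.cong) (auto simp: cof)
    also have "\<dots> = (\<Sum>b<r. M $$ (i, g0 b) * D b) + M $$ (i, l) * E"
      using Dr by (simp add: Ni_def cons_i_def snoc_i_def)
    finally have "M $$ (i, l) * E = - (\<Sum>b<r. M $$ (i, g0 b) * D b)" by (simp add: eq_neg_iff_add_eq_0 add.commute)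
    then have "M $$ (i, l) = - (\<Sum>b<r. M $$ (i, g0 b) * D b) / E" using E by (simp add: field_simps)
    also have "\<dots> = (\<Sum>k<r. (- D k / E) * M $$ (i, g0 k))"
      by (simp add: sum_divide_distrib sum_negf[symmetric] mult.commute)
    finally show ?thesis .
  qed
  show ?thesis by (rule exI[of _ "\<lambda>k. - D k / E"]) (use key in auto)
qed

context vec_space begin

lemma mult_in_span:
  assumes A: "A \<in> carrier_mat n nc" and v: "v \<in> carrier_vec nc"
  shows "A *\<^sub>v v \<in> span (set (cols A))"
proof -
  have cd: "set (cols A) \<subseteq> carrier_vec n" using A cols_dim by blast
  have "lincomb_list (\<lambda>i. v $ i) (cols A) = mat_of_cols n (cols A) *\<^sub>v vec (length (cols A)) (\<lambda>i. v $ i)"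
    by (rule lincomb_list_as_mat_mult) (use cd in auto)
  moreover have "vec (length (cols A)) (\<lambda>i. v $ i) = v" using A v by (intro eq_vecI) auto
  moreover have "mat_of_cols n (cols A) = A" using A mat_of_cols_cols[of A] by auto
  ultimately have eq: "A *\<^sub>v v = lincomb_list (\<lambda>i. v $ i) (cols A)" by simp
  have "A *\<^sub>v v \<in> span_list (cols A)" unfolding span_list_def using eq by auto
  then show ?thesis using span_list_as_span[OF cd] by simp
qed

lemma rank_mono_span:
  assumes A: "A \<in> carrier_mat n a" and B: "B \<in> carrier_mat n b"
    and sub: "set (cols B) \<subseteq> span (set (cols A))"
  shows "rank B \<le> rank A"
proof -
  have "set (cols A) \<subseteq> carrier_vec n" using A cols_dim by blast
  note cA = this
  have "set (cols B) \<subseteq> carrier_vec n" using B cols_dim by blast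
  note cB = this
  have subA: "subspace class_ring (span (set (cols A))) V" by (rule span_is_subspace[OF cA])
  have subB: "subspace class_ring (span (set (cols B))) V" by (rule span_is_subspace[OF cB])
  have "span (set (cols B)) \<subseteq> span (set (cols A))"
    by (rule span_is_subset[OF sub span_is_submodule[OF cA]])
  then have ss: "subspace class_ring (span (set (cols B))) (vs (span (set (cols A))))"
    by (rule nested_subspaces[OF subA subB])
  have vsA: "vectorspace class_ring (vs (span (set (cols A))))" by (rule subspace_is_vs[OF subA])
  have "vectorspace.dim class_ring ((vs (span (set (cols A))))\<lparr>carrier := span (set (cols B))\<rparr>)
        \<le> vectorspace.dim class_ring (vs (span (set (cols A))))"
    by (rule vectorspace.subspace_dim[OF vsA ss fin_dim_span_cols[OF A]])
      (use fin_dim_span_cols[OF B] in simp)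
  then show ?thesis unfolding rank_def by simp
qed


lemma minor_le_rank:
  assumes M: "M \<in> carrier_mat n N" and inr: "inr M f g s" and nz: "minor M f g s \<noteq> 0"
  shows "s \<le> rank M"
proof -
  define C where "C = mat n s (\<lambda>(i,j). M $$ (i, g j))"
  define S where "S = mat s s (\<lambda>(i,j). M $$ (f i, g j))"
  have C: "C \<in> carrier_mat n s" unfolding C_def by simp
  have S: "S \<in> carrier_mat s s" unfolding S_def by simp
  have dS: "det S \<noteq> 0" using nz unfolding minor_def S_def .
  have ker: "v = 0\<^sub>v s" if v: "v \<in> carrier_vec s" and Cv: "C *\<^sub>v v = 0\<^sub>v n" for v
  proof -
    have "S *\<^sub>v v = 0\<^sub>v s"
    proof (rule eq_vecI)
      fix a assume "a < dim_vec (0\<^sub>v s :: 'a vec)" hence a: "a < s" by simp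
      have fa: "f a < n" using inr a M unfolding inr_def by auto
      have "(S *\<^sub>v v) $ a = (\<Sum>j<s. M $$ (f a, g j) * v $ j)"
        using a v unfolding S_def by (simp add: scalar_prod_def atLeast0LessThan)
      also have "\<dots> = (C *\<^sub>v v) $ (f a)"
        using fa v unfolding C_def by (simp add: scalar_prod_def atLeast0LessThan)
      also have "\<dots> = 0" using Cv fa by simp
      finally show "(S *\<^sub>v v) $ a = 0\<^sub>v s $ a" using a by simp
    qed (use S in simp)
    then show ?thesis using det_0_iff_vec_prod_zero_field[OF S] dS v by blast
  qed
  have dist: "distinct (cols C)"
  proof -
    have False if ij: "i < s" "j < s" "i \<noteq> j" "col C i = col C j" for i j
    proof -
      have "col S i = col S j"
      proof (rule eq_vecI)
        fix a assume "a < dim_vec (col S j)" hence a: "a < s" using S by simp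
        have fa: "f a < n" using inr a M unfolding inr_def by auto
        have e: "col C i $ (f a) = col C j $ (f a)" using ij by simp
        then show "col S i $ a = col S j $ a" using a fa ij(1-3) unfolding S_def C_def by simp
      qed (use S in simp)
      then have "det S = 0" by (rule det_identical_columns[OF S \<open>i \<noteq> j\<close> \<open>i < s\<close> \<open>j < s\<close>])
      then show False using dS by simp
    qed
    then show ?thesis unfolding distinct_conv_nth using C by auto
  qed
  have indpt: "lin_indpt (set (cols C))"
  proof
    assume "lin_dep (set (cols C))"
    from lin_depE[OF C this dist] obtain v where "v \<in> carrier_vec s" "v \<noteq> 0\<^sub>v s" "C *\<^sub>v v = 0\<^sub>v n" .
    then show False using ker by auto
  qed
  have rC: "rank C = s" by (rule lin_indpt_full_rank[OF C dist indpt])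
  have cM: "set (cols M) \<subseteq> carrier_vec n" using M cols_dim by blast
  have "set (cols C) \<subseteq> span (set (cols M))"
  proof
    fix x assume "x \<in> set (cols C)"
    then obtain j where j: "j < s" "x = col C j" using C by (metis cols_length cols_nth in_set_conv_nth carrier_matD(2))
    have gj: "g j < N" using inr j M unfolding inr_def by auto
    have "x = col M (g j)" using j C M gj unfolding C_def by (auto intro!: eq_vecI)
    moreover have "col M (g j) \<in> set (cols M)" using gj M by (auto simp: cols_def)
    ultimately show "x \<in> span (set (cols M))" using in_own_span[OF cM] by blast
  qed
  then show ?thesis using rank_mono_span[OF M C] rC by simp
qed

lemma rank_le_minor_size:
  assumes M: "M \<in> carrier_mat n N" and inr: "inr M f0 g0 r" and nz: "minor M f0 g0 r \<noteq> 0"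
    and z: "\<And>f g. inr M f g (Suc r) \<Longrightarrow> minor M f g (Suc r) = 0"
  shows "rank M \<le> r"
proof -
  define C where "C = mat n r (\<lambda>(i,k). M $$ (i, g0 k))"
  have C: "C \<in> carrier_mat n r" unfolding C_def by simp
  have "set (cols M) \<subseteq> span (set (cols C))"
  proof
    fix x assume "x \<in> set (cols M)"
    then obtain l where l: "l < N" "x = col M l" using M by (metis cols_length cols_nth in_set_conv_nth carrier_matD(2))
    have "inr M (cons_i i f0) (snoc_i r g0 l) (Suc r)" if "i < n" for i
      using inr l M that unfolding inr_def cons_i_def snoc_i_def by auto
    then have "\<forall>i<n. minor M (cons_i i f0) (snoc_i r g0 l) (Suc r) = 0" using z by blast
    from cramer_col[OF M inr nz l(1)] this obtain c where c: "\<forall>i<n. M $$ (i, l) = (\<Sum>k<r. c k * M $$ (i, g0 k))"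
      by blast
    have "x = C *\<^sub>v vec r c"
    proof (rule eq_vecI)
      fix i assume "i < dim_vec (C *\<^sub>v vec r c)" hence i: "i < n" using C by simp
      have "(C *\<^sub>v vec r c) $ i = (\<Sum>k<r. M $$ (i, g0 k) * c k)"
        using i unfolding C_def by (simp add: scalar_prod_def atLeast0LessThan)
      also have "\<dots> = M $$ (i, l)" using c i by (simp add: mult.commute)
      also have "\<dots> = x $ i" using l i M by simp
      finally show "x $ i = (C *\<^sub>v vec r c) $ i" by simp
    qed (use l M C in simp)
    then show "x \<in> span (set (cols C))" using mult_in_span[OF C] by simp
  qed
  hence "rank M \<le> rank C" by (rule rank_mono_span[OF C M])
  also have "rank C \<le> r" by (rule rank_le_nc[OF C])
  finally show ?thesis .
qed

lemma rank_minor_exists: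
  assumes M: "M \<in> carrier_mat n N"
  shows "\<exists>f g. inr M f g (rank M) \<and> minor M f g (rank M) \<noteq> 0"
proof -
  define S where "S = {s. \<exists>f g. inr M f g s \<and> minor M f g s \<noteq> 0}"
  have Sb: "S \<subseteq> {..rank M}" using minor_le_rank[OF M] by (auto simp: S_def)
  have fin: "finite S" using finite_subset[OF Sb] by simp
  have "det (mat 0 0 (\<lambda>(i,j). M $$ (id i, id j))) = 1" by (rule det_dim_zero) simp
  then have "0 \<in> S" unfolding S_def minor_def inr_def mem_Collect_eq
    by (intro exI[of _ id]) simp
  define r where "r = Max S"
  have "r \<in> S" unfolding r_def using fin \<open>0 \<in> S\<close> Max_in by blast
  then obtain f0 g0 where fg: "inr M f0 g0 r" "minor M f0 g0 r \<noteq> 0" unfolding S_def by blast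
  have z: "minor M f g (Suc r) = 0" if "inr M f g (Suc r)" for f g
  proof (rule ccontr)
    assume "minor M f g (Suc r) \<noteq> 0"
    then have "Suc r \<in> S" using that unfolding S_def by blast
    then have "Suc r \<le> r" unfolding r_def using fin Max_ge by blast
    then show False by simp
  qed
  have "rank M \<le> r" by (rule rank_le_minor_size[OF M fg z])
  moreover have "r \<le> rank M" by (rule minor_le_rank[OF M fg])
  ultimately show ?thesis using fg by (metis le_antisym)
qed

lemma minor_above_rank:
  assumes M: "M \<in> carrier_mat n N" and inr: "inr M f g s" and s: "rank M < s"
  shows "minor M f g s = 0"
  using minor_le_rank[OF M inr] s by force


lemma rank_ker:
  assumes C: "C \<in> carrier_mat n s"
    and ker: "\<And>v. v \<in> carrier_vec s \<Longrightarrow> C *\<^sub>v v = 0\<^sub>v n \<Longrightarrow> v = 0\<^sub>v s"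
  shows "rank C = s"
proof -
  have dist: "distinct (cols C)"
  proof (rule ccontr)
    assume "\<not> distinct (cols C)"
    then obtain i j where ij: "i < s" "j < s" "i \<noteq> j" "cols C ! i = cols C ! j"
      using C unfolding distinct_conv_nth by auto
    then have cij: "col C i = col C j" using C by simp
    define v :: "'a vec" where "v = unit_vec s i - unit_vec s j"
    have v: "v \<in> carrier_vec s" unfolding v_def by simp
    have "C *\<^sub>v v = 0\<^sub>v n"
    proof (rule eq_vecI)
      fix r assume "r < dim_vec (0\<^sub>v n :: 'a vec)" hence r: "r < n" by simp
      have rC: "row C r \<in> carrier_vec s" using C r by simp
      have "(C *\<^sub>v v) $ r = row C r \<bullet> v" using C r by simp
      also have "\<dots> = row C r \<bullet> unit_vec s i - row C r \<bullet> unit_vec s j"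
        unfolding v_def by (rule scalar_prod_minus_distrib[OF rC]) auto
      also have "\<dots> = C $$ (r, i) - C $$ (r, j)" using ij(1-3) C r by simp
      also have "C $$ (r, i) = col C i $ r" using ij(1-3) C r by simp
      also have "C $$ (r, j) = col C j $ r" using ij(1-3) C r by simp
      finally have "(C *\<^sub>v v) $ r = col C i $ r - col C j $ r" .
      then show "(C *\<^sub>v v) $ r = 0\<^sub>v n $ r" unfolding cij using r by simp
    qed (use C in simp)
    then have "v = 0\<^sub>v s" using ker v by blast
    moreover have "v $ i = 1" unfolding v_def using ij by simp
    ultimately show False using ij by simp
  qed
  have indpt: "lin_indpt (set (cols C))"
  proof
    assume "lin_dep (set (cols C))"
    from lin_depE[OF C this dist] obtain v where "v \<in> carrier_vec s" "v \<noteq> 0\<^sub>v s" "C *\<^sub>v v = 0\<^sub>v n" .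
    then show False using ker by auto
  qed
  show ?thesis by (rule lin_indpt_full_rank[OF C dist indpt])
qed

end

lemma sum_embed:
  fixes F :: "nat \<Rightarrow> 'a::comm_ring_1"
  assumes g: "\<And>j. j < r \<Longrightarrow> g j < n"
  shows "(\<Sum>l<n. F l * (\<Sum>j<r. if g j = l then c j else 0)) = (\<Sum>j<r. F (g j) * c j)"
proof -
  have "(\<Sum>l<n. F l * (\<Sum>j<r. if g j = l then c j else 0)) = (\<Sum>l<n. \<Sum>j<r. if l = g j then F l * c j else 0)"
    unfolding sum_distrib_left by (intro sum.cong refl) auto
  also have "\<dots> = (\<Sum>j<r. \<Sum>l<n. if l = g j then F l * c j else 0)" by (rule sum.swap)
  also have "\<dots> = (\<Sum>j<r. F (g j) * c j)" using g by (intro sum.cong) (auto simp: sum.delta)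
  finally show ?thesis .
qed

lemma zero_row_minor:
  assumes a: "a < s" and z: "\<And>j. j < s \<Longrightarrow> M $$ (f a, g j) = 0"
  shows "minor M f g s = 0"
proof -
  let ?S = "mat s s (\<lambda>(i,j). M $$ (f i, g j))"
  have "det ?S = (\<Sum>j<s. ?S $$ (a,j) * cofactor ?S a j)" by (rule laplace_expansion_row) (use a in auto)
  also have "\<dots> = 0" using a z by (intro sum.neutral) auto
  finally show ?thesis unfolding minor_def .
qed


lemma exact_le:
  fixes A Q :: "'a::field mat"
  assumes A: "A \<in> carrier_mat m n" and Q: "Q \<in> carrier_mat q m"
    and QA: "\<And>u. u \<in> carrier_vec n \<Longrightarrow> Q *\<^sub>v (A *\<^sub>v u) = 0\<^sub>v q"
  shows "vec_space.rank m A + vec_space.rank q Q \<le> m"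
proof -
  define ga where "ga = vec_space.rank m A"
  define h where "h = vec_space.rank q Q"
  obtain f1 g1 where fg1: "inr A f1 g1 ga" "minor A f1 g1 ga \<noteq> 0"
    using vec_space.rank_minor_exists[OF A] unfolding ga_def by blast
  obtain f2 g2 where fg2: "inr Q f2 g2 h" "minor Q f2 g2 h \<noteq> 0"
    using vec_space.rank_minor_exists[OF Q] unfolding h_def by blast
  have g1n: "\<And>j. j < ga \<Longrightarrow> g1 j < n" and f1m: "\<And>a. a < ga \<Longrightarrow> f1 a < m"
    using fg1(1) A unfolding inr_def by auto
  have g2m: "\<And>j. j < h \<Longrightarrow> g2 j < m" and f2q: "\<And>a. a < h \<Longrightarrow> f2 a < q"
    using fg2(1) Q unfolding inr_def by auto
  have inj2: "inj_on g2 {..<h}" by (rule minor_inj(2)[OF fg2(2)])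
  define G where "G = g2 ` {..<h}"
  have cardG: "card G = h" unfolding G_def using card_image[OF inj2] by simp
  have Gm: "G \<subseteq> {..<m}" using g2m unfolding G_def by auto
  define C where "C = mat m ga (\<lambda>(i,j). if i \<in> G then 0 else A $$ (i, g1 j))"
  have C: "C \<in> carrier_mat m ga" unfolding C_def by simp
  have ker: "v = 0\<^sub>v ga" if v: "v \<in> carrier_vec ga" and Cv: "C *\<^sub>v v = 0\<^sub>v m" for v
  proof -
    define u where "u = vec n (\<lambda>l. \<Sum>j<ga. if g1 j = l then v $ j else 0)"
    have u: "u \<in> carrier_vec n" unfolding u_def by simp
    define x where "x = A *\<^sub>v u"
    have xi: "x $ i = (\<Sum>j<ga. A $$ (i, g1 j) * v $ j)" if i: "i < m" for i
    proof -
      have "x $ i = (\<Sum>l<n. A $$ (i, l) * u $ l)"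
        unfolding x_def using A i u by (simp add: scalar_prod_def atLeast0LessThan)
      also have "\<dots> = (\<Sum>l<n. A $$ (i, l) * (\<Sum>j<ga. if g1 j = l then v $ j else 0))"
        by (rule sum.cong) (auto simp: u_def)
      also have "\<dots> = (\<Sum>j<ga. A $$ (i, g1 j) * v $ j)" by (rule sum_embed[OF g1n])
      finally show ?thesis .
    qed
    have x0: "x $ i = 0" if i: "i < m" "i \<notin> G" for i
    proof -
      have "(C *\<^sub>v v) $ i = (\<Sum>j<ga. A $$ (i, g1 j) * v $ j)"
        using i v unfolding C_def by (simp add: scalar_prod_def atLeast0LessThan)
      then show ?thesis using Cv xi[OF i(1)] i by simp
    qed
    have Qx: "Q *\<^sub>v x = 0\<^sub>v q" unfolding x_def using QA[OF u] .
    have xdim: "x \<in> carrier_vec m" unfolding x_def using A u by simp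
    define y where "y = vec h (\<lambda>k. x $ (g2 k))"
    define SQ where "SQ = mat h h (\<lambda>(a,k). Q $$ (f2 a, g2 k))"
    have SQ: "SQ \<in> carrier_mat h h" unfolding SQ_def by simp
    have "SQ *\<^sub>v y = 0\<^sub>v h"
    proof (rule eq_vecI)
      fix a assume "a < dim_vec (0\<^sub>v h :: 'a vec)" hence a: "a < h" by simp
      have fa: "f2 a < q" using f2q[OF a] .
      have "(SQ *\<^sub>v y) $ a = (\<Sum>k<h. Q $$ (f2 a, g2 k) * x $ (g2 k))"
        unfolding SQ_def y_def using a by (simp add: scalar_prod_def atLeast0LessThan)
      also have "\<dots> = (\<Sum>l\<in>G. Q $$ (f2 a, l) * x $ l)"
        unfolding G_def by (simp add: sum.reindex[OF inj2])
      also have "\<dots> = (\<Sum>l<m. Q $$ (f2 a, l) * x $ l)"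
        by (rule sum.mono_neutral_left) (use Gm x0 in auto)
      also have "\<dots> = (Q *\<^sub>v x) $ (f2 a)"
        using Q fa xdim by (simp add: scalar_prod_def atLeast0LessThan)
      also have "\<dots> = 0" using Qx fa by simp
      finally show "(SQ *\<^sub>v y) $ a = 0\<^sub>v h $ a" using a by simp
    qed (use SQ in simp)
    moreover have "y \<in> carrier_vec h" unfolding y_def by simp
    moreover have "det SQ \<noteq> 0" using fg2(2) unfolding minor_def SQ_def .
    ultimately have "y = 0\<^sub>v h" using det_0_iff_vec_prod_zero_field[OF SQ] by blast
    then have xG: "x $ (g2 k) = 0" if "k < h" for k
      using that unfolding y_def by (metis index_vec index_zero_vec(1))
    have xz: "x $ i = 0" if "i < m" for i
    proof (cases "i \<in> G")
      case True then show ?thesis using xG unfolding G_def by auto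
    next
      case False then show ?thesis using x0 that by simp
    qed
    define SA where "SA = mat ga ga (\<lambda>(a,j). A $$ (f1 a, g1 j))"
    have SA: "SA \<in> carrier_mat ga ga" unfolding SA_def by simp
    have "SA *\<^sub>v v = 0\<^sub>v ga"
    proof (rule eq_vecI)
      fix a assume "a < dim_vec (0\<^sub>v ga :: 'a vec)" hence a: "a < ga" by simp
      have "(SA *\<^sub>v v) $ a = (\<Sum>j<ga. A $$ (f1 a, g1 j) * v $ j)"
        unfolding SA_def using a v by (simp add: scalar_prod_def atLeast0LessThan)
      also have "\<dots> = x $ (f1 a)" using xi f1m a by simp
      also have "\<dots> = 0" using xz f1m a by simp
      finally show "(SA *\<^sub>v v) $ a = 0\<^sub>v ga $ a" using a by simp
    qed (use SA in simp)
    moreover have "det SA \<noteq> 0" using fg1(2) unfolding minor_def SA_def .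
    ultimately show "v = 0\<^sub>v ga" using det_0_iff_vec_prod_zero_field[OF SA] v by blast
  qed
  have rC: "vec_space.rank m C = ga" by (rule vec_space.rank_ker[OF C ker])
  obtain f g where fg: "inr C f g ga" "minor C f g ga \<noteq> 0"
    using vec_space.rank_minor_exists[OF C] rC by metis
  have injf: "inj_on f {..<ga}" by (rule minor_inj(1)[OF fg(2)])
  have fG: "f a \<notin> G" if a: "a < ga" for a
  proof
    assume fa: "f a \<in> G"
    have "minor C f g ga = 0"
    proof (rule zero_row_minor[OF a])
      fix j assume "j < ga"
      then show "C $$ (f a, g j) = 0" using fg(1) C a fa unfolding C_def inr_def by auto
    qed
    with fg(2) show False by simp
  qed
  have "f ` {..<ga} \<subseteq> {..<m} - G" using fg(1) C fG unfolding inr_def by auto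
  then have "card (f ` {..<ga}) \<le> card ({..<m} - G)" by (intro card_mono) auto
  moreover have "card ({..<m} - G) = m - h"
    using card_Diff_subset[OF finite_subset[OF Gm] Gm] cardG by simp
  moreover have "card (f ` {..<ga}) = ga" using card_image[OF injf] by simp
  moreover have "h \<le> m" unfolding h_def by (rule vec_space.rank_le_nc[OF Q])
  ultimately show ?thesis unfolding ga_def[symmetric] h_def[symmetric] by linarith
qed


lemma exact_ge:
  fixes A Q :: "'a::field mat"
  assumes A: "A \<in> carrier_mat m n" and Q: "Q \<in> carrier_mat q m"
    and ex: "\<And>w. w \<in> carrier_vec m \<Longrightarrow> Q *\<^sub>v w = 0\<^sub>v q \<Longrightarrow> \<exists>u \<in> carrier_vec n. w = A *\<^sub>v u"
  shows "m \<le> vec_space.rank m A + vec_space.rank q Q"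
proof -
  interpret V: vec_space "TYPE('a)" m .
  define h where "h = vec_space.rank q Q"
  obtain f2 g2 where fg2: "inr Q f2 g2 h" "minor Q f2 g2 h \<noteq> 0"
    using vec_space.rank_minor_exists[OF Q] unfolding h_def by blast
  have g2m: "\<And>j. j < h \<Longrightarrow> g2 j < m"
    using fg2(1) Q unfolding inr_def by auto
  have inj2: "inj_on g2 {..<h}" by (rule minor_inj(2)[OF fg2(2)])
  define G where "G = g2 ` {..<h}"
  have cardG: "card G = h" unfolding G_def using card_image[OF inj2] by simp
  have Gm: "G \<subseteq> {..<m}" using g2m unfolding G_def by auto
  have colrep: "\<exists>c. \<forall>i<q. Q $$ (i,l) = (\<Sum>k<h. c k * Q $$ (i, g2 k))" if l: "l < m" for l
  proof (rule cramer_col[OF Q fg2 l])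
    fix i assume i: "i < q"
    show "minor Q (cons_i i f2) (snoc_i h g2 l) (Suc h) = 0"
      by (rule vec_space.minor_above_rank[OF Q])
        (use fg2(1) Q l i in \<open>auto simp: inr_def cons_i_def snoc_i_def h_def\<close>)
  qed
  have "\<forall>l. \<exists>c. l < m \<longrightarrow> (\<forall>i<q. Q $$ (i,l) = (\<Sum>k<h. c k * Q $$ (i, g2 k)))"
    using colrep by blast
  from choice[OF this] obtain cc where
    cc: "\<And>l. l < m \<Longrightarrow> \<forall>i<q. Q $$ (i,l) = (\<Sum>k<h. cc l k * Q $$ (i, g2 k))" by blast
  define w where "w l = vec m (\<lambda>i. (if i = l then 1 else 0) - (\<Sum>k<h. if g2 k = i then cc l k else 0))" for l
  have w: "w l \<in> carrier_vec m" for l unfolding w_def by simp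
  have wd: "dim_vec (w l) = m" for l unfolding w_def by simp
  have Qw: "Q *\<^sub>v w l = 0\<^sub>v q" if l: "l < m" for l
  proof (rule eq_vecI)
    fix i assume "i < dim_vec (0\<^sub>v q :: 'a vec)" hence i: "i < q" by simp
    have "(Q *\<^sub>v w l) $ i = (\<Sum>t<m. Q $$ (i,t) * ((if t = l then 1 else 0) - (\<Sum>k<h. if g2 k = t then cc l k else 0)))"
      using i Q unfolding w_def by (simp add: scalar_prod_def atLeast0LessThan)
    also have "\<dots> = (\<Sum>t<m. Q $$ (i,t) * (if t = l then 1 else 0)) - (\<Sum>t<m. Q $$ (i,t) * (\<Sum>k<h. if g2 k = t then cc l k else 0))"
      by (simp add: right_diff_distrib sum_subtractf)
    also have "(\<Sum>t<m. Q $$ (i,t) * (if t = l then 1 else 0)) = (\<Sum>t<m. if t = l then Q $$ (i,t) else 0)"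
      by (rule sum.cong) auto
    also have "\<dots> = Q $$ (i,l)" using l by (simp add: sum.delta)
    also have "(\<Sum>t<m. Q $$ (i,t) * (\<Sum>k<h. if g2 k = t then cc l k else 0)) = (\<Sum>k<h. Q $$ (i, g2 k) * cc l k)"
      by (rule sum_embed[OF g2m])
    also have "Q $$ (i,l) - (\<Sum>k<h. Q $$ (i, g2 k) * cc l k) = 0" using cc[OF l] i by (simp add: mult.commute)
    finally show "(Q *\<^sub>v w l) $ i = 0\<^sub>v q $ i" using i by simp
  qed (use Q in simp)
  have "\<forall>l. \<exists>u. l < m \<longrightarrow> u \<in> carrier_vec n \<and> w l = A *\<^sub>v u" using ex[OF w Qw] by blast
  from choice[OF this] obtain uu where uu: "\<And>l. l < m \<Longrightarrow> uu l \<in> carrier_vec n \<and> w l = A *\<^sub>v uu l" by blast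
  define L where "L = sorted_list_of_set ({..<m} - G)"
  have Lset: "set L = {..<m} - G" unfolding L_def by simp
  have Ldist: "distinct L" unfolding L_def by simp
  have Llen: "length L = m - h" unfolding L_def
    using card_Diff_subset[OF finite_subset[OF Gm] Gm] cardG by simp
  have Lj: "L ! j < m" "L ! j \<notin> G" if "j < m - h" for j
    using nth_mem[of j L] that Llen Lset by auto
  define W where "W = mat m (m - h) (\<lambda>(i,j). w (L ! j) $ i)"
  have W: "W \<in> carrier_mat m (m - h)" unfolding W_def by simp
  have colW: "col W j = A *\<^sub>v uu (L ! j)" if j: "j < m - h" for j
  proof -
    have "col W j = w (L ! j)" using j wd unfolding W_def by (intro eq_vecI) auto
    then show ?thesis using uu[OF Lj(1)[OF j]] by simp
  qed
  have "set (cols W) \<subseteq> V.span (set (cols A))"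
  proof
    fix x assume "x \<in> set (cols W)"
    then obtain j where j: "j < m - h" "x = col W j" using W by (metis cols_length cols_nth in_set_conv_nth carrier_matD(2))
    then show "x \<in> V.span (set (cols A))" using colW V.mult_in_span[OF A] uu Lj by simp
  qed
  then have le: "V.rank W \<le> V.rank A" by (rule V.rank_mono_span[OF A W])
  have kerW: "v = 0\<^sub>v (m - h)" if v: "v \<in> carrier_vec (m - h)" and Wv: "W *\<^sub>v v = 0\<^sub>v m" for v
  proof (rule eq_vecI)
    fix j' assume "j' < dim_vec (0\<^sub>v (m - h) :: 'a vec)" hence j': "j' < m - h" by simp
    have ent: "w (L ! j) $ (L ! j') = (if j = j' then 1 else 0)" if j: "j < m - h" for j
    proof -
      have "(\<Sum>k<h. if g2 k = L ! j' then cc (L ! j) k else 0) = 0"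
        using Lj(2)[OF j'] unfolding G_def by (intro sum.neutral) force
      moreover have "(L ! j' = L ! j) = (j' = j)" using Ldist j j' Llen by (simp add: nth_eq_iff_index_eq)
      ultimately show ?thesis using Lj(1)[OF j'] unfolding w_def by auto
    qed
    have "(W *\<^sub>v v) $ (L ! j') = (\<Sum>j<m - h. w (L ! j) $ (L ! j') * v $ j)"
      using Lj(1)[OF j'] v unfolding W_def by (simp add: scalar_prod_def atLeast0LessThan)
    also have "\<dots> = (\<Sum>j<m - h. if j = j' then v $ j else 0)" by (rule sum.cong) (auto simp: ent)
    also have "\<dots> = v $ j'" using j' by (simp add: sum.delta')
    finally show "v $ j' = 0\<^sub>v (m - h) $ j'" using Wv Lj(1)[OF j'] j' by simp
  qed (use v in simp)
  have "V.rank W = m - h" by (rule V.rank_ker[OF W kerW])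
  then show ?thesis using le unfolding h_def by linarith
qed




definition mono_fun :: "nat \<Rightarrow> (nat \<Rightarrow> nat) \<Rightarrow> (nat \<Rightarrow> 'a::comm_ring_1) \<Rightarrow> 'a" where
  "mono_fun d \<alpha> \<xi> = (\<Prod>i<d. \<xi> i ^ \<alpha> i)"

lemma hom_poly_fun_alt:
  "hom_poly_fun d k f \<longleftrightarrow> (\<exists>c. \<forall>\<xi>. f \<xi> = (\<Sum>\<alpha>\<in>monomials_deg d k. c \<alpha> * mono_fun d \<alpha> \<xi>))"
  unfolding hom_poly_fun_def mono_fun_def ..

lemma finite_monomials: "finite (monomials_deg d k)"
proof -
  have "monomials_deg d k \<subseteq> {\<alpha>. \<forall>x. (x \<in> {..<d} \<longrightarrow> \<alpha> x \<in> {..k}) \<and> (x \<notin> {..<d} \<longrightarrow> \<alpha> x = 0)}"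
  proof
    fix \<alpha> assume a: "\<alpha> \<in> monomials_deg d k"
    have "\<alpha> x \<le> k" if "x < d" for x
    proof -
      have "\<alpha> x \<le> (\<Sum>i<d. \<alpha> i)" by (rule member_le_sum) (use that in auto)
      then show ?thesis using a unfolding monomials_deg_def by simp
    qed
    then show "\<alpha> \<in> {\<alpha>. \<forall>x. (x \<in> {..<d} \<longrightarrow> \<alpha> x \<in> {..k}) \<and> (x \<notin> {..<d} \<longrightarrow> \<alpha> x = 0)}"
      using a unfolding monomials_deg_def by auto
  qed
  moreover have "finite {\<alpha>. \<forall>x. (x \<in> {..<d} \<longrightarrow> \<alpha> x \<in> {..k}) \<and> (x \<notin> {..<d} \<longrightarrow> \<alpha> x = (0::nat))}"
    by (rule finite_set_of_finite_funs) auto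
  ultimately show ?thesis by (rule finite_subset)
qed

lemma hom_zero: "hom_poly_fun d k (\<lambda>_. 0)"
  unfolding hom_poly_fun_alt by (rule exI[of _ "\<lambda>_. 0"]) simp

lemma hom_add:
  assumes "hom_poly_fun d k F" "hom_poly_fun d k G"
  shows "hom_poly_fun d k (\<lambda>\<xi>. F \<xi> + G \<xi>)"
proof -
  obtain c1 where c1: "\<And>\<xi>. F \<xi> = (\<Sum>\<alpha>\<in>monomials_deg d k. c1 \<alpha> * mono_fun d \<alpha> \<xi>)"
    using assms(1) unfolding hom_poly_fun_alt by blast
  obtain c2 where c2: "\<And>\<xi>. G \<xi> = (\<Sum>\<alpha>\<in>monomials_deg d k. c2 \<alpha> * mono_fun d \<alpha> \<xi>)"
    using assms(2) unfolding hom_poly_fun_alt by blast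
  show ?thesis unfolding hom_poly_fun_alt
    by (rule exI[of _ "\<lambda>\<alpha>. c1 \<alpha> + c2 \<alpha>"]) (simp add: c1 c2 sum.distrib distrib_right)
qed

lemma hom_cmul:
  assumes "hom_poly_fun d k F"
  shows "hom_poly_fun d k (\<lambda>\<xi>. a * F \<xi>)"
proof -
  obtain c1 where c1: "\<And>\<xi>. F \<xi> = (\<Sum>\<alpha>\<in>monomials_deg d k. c1 \<alpha> * mono_fun d \<alpha> \<xi>)"
    using assms(1) unfolding hom_poly_fun_alt by blast
  show ?thesis unfolding hom_poly_fun_alt
    by (rule exI[of _ "\<lambda>\<alpha>. a * c1 \<alpha>"]) (simp add: c1 sum_distrib_left mult.assoc)
qed

lemma hom_sum:
  assumes "finite S" "\<And>s. s \<in> S \<Longrightarrow> hom_poly_fun d k (F s)"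
  shows "hom_poly_fun d k (\<lambda>\<xi>. \<Sum>s\<in>S. F s \<xi>)"
  using assms by (induction S rule: finite_induct) (auto intro: hom_zero hom_add)

lemma monomials_0: "monomials_deg d 0 = {\<lambda>_. 0}"
  unfolding monomials_deg_def by (auto simp: fun_eq_iff) (metis lessThan_iff not_le)

lemma hom_const: "hom_poly_fun d 0 (\<lambda>_. a)"
  unfolding hom_poly_fun_alt monomials_0 by (rule exI[of _ "\<lambda>_. a"]) (simp add: mono_fun_def)

lemma hom_mult:
  assumes "hom_poly_fun d k1 F" "hom_poly_fun d k2 G"
  shows "hom_poly_fun d (k1 + k2) (\<lambda>\<xi>. F \<xi> * G \<xi>)"
proof -
  obtain c1 where c1: "\<And>\<xi>. F \<xi> = (\<Sum>\<alpha>\<in>monomials_deg d k1. c1 \<alpha> * mono_fun d \<alpha> \<xi>)"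
    using assms(1) unfolding hom_poly_fun_alt by blast
  obtain c2 where c2: "\<And>\<xi>. G \<xi> = (\<Sum>\<alpha>\<in>monomials_deg d k2. c2 \<alpha> * mono_fun d \<alpha> \<xi>)"
    using assms(2) unfolding hom_poly_fun_alt by blast
  define S where "S = monomials_deg d k1 \<times> monomials_deg d k2"
  define pl where "pl = (\<lambda>(\<alpha>::nat\<Rightarrow>nat, \<beta>::nat\<Rightarrow>nat). (\<lambda>i. \<alpha> i + \<beta> i))"
  define T where "T = monomials_deg d (k1 + k2)"
  have fS: "finite S" unfolding S_def using finite_monomials by simp
  have fT: "finite T" unfolding T_def using finite_monomials by simp
  have ST: "pl ` S \<subseteq> T" unfolding S_def T_def pl_def monomials_deg_def by (auto simp: sum.distrib)
  have mono_mult: "mono_fun d \<alpha> \<xi> * mono_fun d \<beta> \<xi> = mono_fun d (\<lambda>i. \<alpha> i + \<beta> i) \<xi>" for \<alpha> \<beta> and \<xi> :: "nat \<Rightarrow> 'a"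
    unfolding mono_fun_def by (simp add: power_add prod.distrib)
  define C where "C \<gamma> = (\<Sum>x\<in>{x \<in> S. pl x = \<gamma>}. c1 (fst x) * c2 (snd x))" for \<gamma>
  have "F \<xi> * G \<xi> = (\<Sum>\<gamma>\<in>T. C \<gamma> * mono_fun d \<gamma> \<xi>)" for \<xi>
  proof -
    have "F \<xi> * G \<xi> = (\<Sum>\<alpha>\<in>monomials_deg d k1. \<Sum>\<beta>\<in>monomials_deg d k2. (c1 \<alpha> * mono_fun d \<alpha> \<xi>) * (c2 \<beta> * mono_fun d \<beta> \<xi>))"
      unfolding c1 c2 by (simp add: sum_product)
    also have "\<dots> = (\<Sum>x\<in>S. c1 (fst x) * c2 (snd x) * mono_fun d (pl x) \<xi>)"
      unfolding S_def sum.cartesian_product pl_def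
      by (intro sum.cong refl) (auto simp: mono_mult[symmetric] ac_simps)
    also have "\<dots> = (\<Sum>\<gamma>\<in>T. \<Sum>x\<in>{x \<in> S. pl x = \<gamma>}. c1 (fst x) * c2 (snd x) * mono_fun d (pl x) \<xi>)"
      by (rule sum.group[OF fS fT ST, symmetric])
    also have "\<dots> = (\<Sum>\<gamma>\<in>T. C \<gamma> * mono_fun d \<gamma> \<xi>)"
      unfolding C_def sum_distrib_right by (intro sum.cong refl) auto
    finally show ?thesis .
  qed
  then show ?thesis unfolding hom_poly_fun_alt T_def by blast
qed

lemma hom_prod:
  assumes "finite S" "\<And>s. s \<in> S \<Longrightarrow> hom_poly_fun d k (F s)"
  shows "hom_poly_fun d (card S * k) (\<lambda>\<xi>. \<Prod>s\<in>S. F s \<xi>)"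
  using assms
proof (induction S rule: finite_induct)
  case empty
  then show ?case using hom_const[of d 1] by simp
next
  case (insert x S)
  have "hom_poly_fun d (k + card S * k) (\<lambda>\<xi>. F x \<xi> * (\<Prod>s\<in>S. F s \<xi>))"
    by (rule hom_mult) (use insert in auto)
  then show ?case using insert by simp
qed

lemma hom_det:
  assumes "\<And>i j. i < s \<Longrightarrow> j < s \<Longrightarrow> hom_poly_fun d k (\<lambda>\<xi>. F \<xi> i j)"
  shows "hom_poly_fun d (s * k) (\<lambda>\<xi>. det (mat s s (\<lambda>(i,j). F \<xi> i j)))"
proof -
  have eq: "det (mat s s (\<lambda>(i,j). F \<xi> i j)) = (\<Sum>p\<in>{p. p permutes {0..<s}}. signof p * (\<Prod>i\<in>{0..<s}. F \<xi> i (p i)))" for \<xi>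
    by (subst det_def'[of _ s]) (auto intro!: sum.cong prod.cong simp: permutes_in_image)
  have "hom_poly_fun d (s * k) (\<lambda>\<xi>. \<Sum>p\<in>{p. p permutes {0..<s}}. signof p * (\<Prod>i\<in>{0..<s}. F \<xi> i (p i)))"
  proof (rule hom_sum)
    show "finite {p. p permutes {0..<s}}" by (rule finite_permutations) simp
    fix p assume "p \<in> {p. p permutes {0..<s}}"
    then have p: "p permutes {0..<s}" by simp
    have "hom_poly_fun d (card {0..<s} * k) (\<lambda>\<xi>. \<Prod>i\<in>{0..<s}. F \<xi> i (p i))"
      by (rule hom_prod) (use assms p in \<open>auto simp: permutes_in_image\<close>)
    then show "hom_poly_fun d (s * k) (\<lambda>\<xi>. signof p * (\<Prod>i\<in>{0..<s}. F \<xi> i (p i)))"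
      by (intro hom_cmul) simp
  qed
  then show ?thesis unfolding eq .
qed


definition upoly :: "('a::comm_ring_1 \<Rightarrow> 'a) \<Rightarrow> bool" where
  "upoly F \<longleftrightarrow> (\<exists>p. \<forall>t. F t = poly p t)"

lemma upoly_const: "upoly (\<lambda>_. c)"
  unfolding upoly_def by (rule exI[of _ "[:c:]"]) simp

lemma upoly_lin: "upoly (\<lambda>t. a + t * b)"
  unfolding upoly_def by (rule exI[of _ "[:a, b:]"]) (simp add: algebra_simps)

lemma upoly_add: "upoly F \<Longrightarrow> upoly G \<Longrightarrow> upoly (\<lambda>t. F t + G t)"
  unfolding upoly_def by (metis poly_add)

lemma upoly_mult: "upoly F \<Longrightarrow> upoly G \<Longrightarrow> upoly (\<lambda>t. F t * G t)"
  unfolding upoly_def by (metis poly_mult)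

lemma upoly_sum:
  assumes "finite S" "\<And>s. s \<in> S \<Longrightarrow> upoly (F s)"
  shows "upoly (\<lambda>t. \<Sum>s\<in>S. F s t)"
  using assms by (induction S rule: finite_induct) (auto intro: upoly_const upoly_add)

lemma upoly_prod:
  assumes "finite S" "\<And>s. s \<in> S \<Longrightarrow> upoly (F s)"
  shows "upoly (\<lambda>t. \<Prod>s\<in>S. F s t)"
  using assms by (induction S rule: finite_induct) (auto intro: upoly_const upoly_mult)

lemma upoly_power: "upoly F \<Longrightarrow> upoly (\<lambda>t. F t ^ e)"
  by (induction e) (auto intro: upoly_const upoly_mult)

lemma hom_upoly:
  assumes "hom_poly_fun d k G"
  shows "upoly (\<lambda>t. G (\<lambda>i. a i + t * b i))"
proof -
  obtain c where c: "\<And>\<xi>. G \<xi> = (\<Sum>\<alpha>\<in>monomials_deg d k. c \<alpha> * (\<Prod>i<d. \<xi> i ^ \<alpha> i))"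
    using assms unfolding hom_poly_fun_def by blast
  show ?thesis unfolding c
    by (intro upoly_sum upoly_mult upoly_const upoly_prod upoly_power upoly_lin finite_monomials) auto
qed

lemma upoly_det:
  assumes "\<And>i j. i < s \<Longrightarrow> j < s \<Longrightarrow> upoly (\<lambda>t. F t i j)"
  shows "upoly (\<lambda>t. det (mat s s (\<lambda>(i,j). F t i j)))"
proof -
  have eq: "det (mat s s (\<lambda>(i,j). F t i j)) = (\<Sum>p\<in>{p. p permutes {0..<s}}. signof p * (\<Prod>i\<in>{0..<s}. F t i (p i)))" for t
    by (subst det_def'[of _ s]) (auto intro!: sum.cong prod.cong simp: permutes_in_image)
  show ?thesis unfolding eq
    by (intro upoly_sum upoly_mult upoly_const upoly_prod finite_permutations)
      (use assms in \<open>auto simp: permutes_in_image\<close>)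
qed

lemma upoly_common_nonzero:
  fixes F1 F2 F3 :: "'a::field_char_0 \<Rightarrow> 'a"
  assumes "upoly F1" "upoly F2" "upoly F3" "F1 t1 \<noteq> 0" "F2 t2 \<noteq> 0" "F3 t3 \<noteq> 0"
  shows "\<exists>t. F1 t \<noteq> 0 \<and> F2 t \<noteq> 0 \<and> F3 t \<noteq> 0"
proof -
  obtain p1 p2 p3 where p: "\<And>t. F1 t = poly p1 t" "\<And>t. F2 t = poly p2 t" "\<And>t. F3 t = poly p3 t"
    using assms(1-3) unfolding upoly_def by metis
  have "p1 \<noteq> 0" "p2 \<noteq> 0" "p3 \<noteq> 0" using assms(4-6) p by auto
  then have "p1 * p2 * p3 \<noteq> 0" by simp
  then obtain t where "poly (p1 * p2 * p3) t \<noteq> 0" using poly_all_0_iff_0 by blast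
  then show ?thesis using p by auto
qed



lemma hom_symbolD:
  assumes "hom_symbol d k m n A"
  shows "A \<xi> \<in> carrier_mat m n" "i < m \<Longrightarrow> j < n \<Longrightarrow> hom_poly_fun d k (\<lambda>\<xi>. A \<xi> $$ (i, j))"
  using assms unfolding hom_symbol_def by auto

lemma minor_upoly:
  assumes hA: "hom_symbol d k m n A" and inr: "inr (A x) f g s"
  shows "upoly (\<lambda>t. minor (A (\<lambda>i. a i + t * b i)) f g s)"
  unfolding minor_def
proof (rule upoly_det)
  fix i j assume ij: "i < s" "j < s"
  have "f i < m" "g j < n" using inr ij hom_symbolD(1)[OF hA, of x] unfolding inr_def by auto
  then show "upoly (\<lambda>t. A (\<lambda>i. a i + t * b i) $$ (f i, g j))"
    by (rule hom_upoly[OF hom_symbolD(2)[OF hA]])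
qed

lemma inr_carrier:
  assumes "M \<in> carrier_mat m n" "M' \<in> carrier_mat m n" "inr M f g s"
  shows "inr M' f g s"
  using assms unfolding inr_def by auto

lemma dir21_le:
  fixes A :: "(nat \<Rightarrow> 'a::field_char_0) \<Rightarrow> 'a mat" and Q :: "(nat \<Rightarrow> 'a) \<Rightarrow> 'a mat"
  assumes hA: "hom_symbol d k m n A" and hQ: "hom_symbol d kQ q m Q"
    and ex: "\<And>y. nonzero_pt d y \<Longrightarrow> mat_image (A y) = mat_kernel (Q y)"
    and x1: "nonzero_pt d x1" and x2: "nonzero_pt d x2"
  shows "vec_space.rank m (A x1) \<le> vec_space.rank m (A x2)"
proof -
  have Ac: "A y \<in> carrier_mat m n" for y using hom_symbolD(1)[OF hA] .
  have Qc: "Q y \<in> carrier_mat q m" for y using hom_symbolD(1)[OF hQ] .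
  have QA: "Q y *\<^sub>v (A y *\<^sub>v u) = 0\<^sub>v q" if y: "nonzero_pt d y" and u: "u \<in> carrier_vec n" for y u
  proof -
    have "A y *\<^sub>v u \<in> mat_image (A y)" unfolding mat_image_def using u Ac[of y] by auto
    then have "A y *\<^sub>v u \<in> mat_kernel (Q y)" using ex[OF y] by simp
    then show ?thesis using mat_kernelD(2)[OF Qc] by blast
  qed
  have exu: "\<exists>u \<in> carrier_vec n. w = A y *\<^sub>v u"
    if y: "nonzero_pt d y" and w: "w \<in> carrier_vec m" "Q y *\<^sub>v w = 0\<^sub>v q" for y w
  proof -
    have "w \<in> mat_kernel (Q y)" by (rule mat_kernelI[OF Qc w])
    then have "w \<in> mat_image (A y)" using ex[OF y] by simp
    then show ?thesis unfolding mat_image_def using Ac[of y] by auto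
  qed
  define r1 where "r1 = vec_space.rank m (A x1)"
  define h2 where "h2 = vec_space.rank q (Q x2)"
  obtain f1 g1 where fg1: "inr (A x1) f1 g1 r1" "minor (A x1) f1 g1 r1 \<noteq> 0"
    using vec_space.rank_minor_exists[OF Ac] unfolding r1_def by blast
  obtain f2 g2 where fg2: "inr (Q x2) f2 g2 h2" "minor (Q x2) f2 g2 h2 \<noteq> 0"
    using vec_space.rank_minor_exists[OF Qc] unfolding h2_def by blast
  obtain i0 where i0: "i0 < d" "x1 i0 \<noteq> 0" using x1 unfolding nonzero_pt_def by blast
  define p where "p t = (\<lambda>i. x1 i + t * (x2 i - x1 i))" for t
  have p0: "p 0 = x1" and p1: "p 1 = x2" unfolding p_def by auto
  have u1: "upoly (\<lambda>t. minor (A (p t)) f1 g1 r1)" unfolding p_def by (rule minor_upoly[OF hA fg1(1)])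
  have u2: "upoly (\<lambda>t. minor (Q (p t)) f2 g2 h2)" unfolding p_def by (rule minor_upoly[OF hQ fg2(1)])
  have u3: "upoly (\<lambda>t. p t i0)" unfolding p_def by (rule upoly_lin)
  obtain t where t: "minor (A (p t)) f1 g1 r1 \<noteq> 0" "minor (Q (p t)) f2 g2 h2 \<noteq> 0" "p t i0 \<noteq> 0"
    using upoly_common_nonzero[OF u1 u2 u3, of 0 1 0] fg1(2) fg2(2) i0(2) p0 p1 by auto
  define y where "y = p t"
  have y: "nonzero_pt d y" unfolding y_def nonzero_pt_def using t(3) i0(1) by blast
  have "r1 \<le> vec_space.rank m (A y)"
    using vec_space.minor_le_rank[OF Ac inr_carrier[OF Ac Ac fg1(1)] t(1)[folded y_def]] .
  moreover have "h2 \<le> vec_space.rank q (Q y)"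
    using vec_space.minor_le_rank[OF Qc inr_carrier[OF Qc Qc fg2(1)] t(2)[folded y_def]] .
  moreover have "vec_space.rank m (A y) + vec_space.rank q (Q y) \<le> m"
    by (rule exact_le[OF Ac Qc QA[OF y]])
  moreover have "m \<le> vec_space.rank m (A x2) + vec_space.rank q (Q x2)"
    by (rule exact_ge[OF Ac Qc exu[OF x2]])
  ultimately show ?thesis unfolding r1_def h2_def by linarith
qed

lemma dir21:
  fixes A :: "(nat \<Rightarrow> 'a::field_char_0) \<Rightarrow> 'a mat" and Q :: "(nat \<Rightarrow> 'a) \<Rightarrow> 'a mat"
  assumes hA: "hom_symbol d k m n A" and hQ: "hom_symbol d kQ q m Q"
    and ex: "\<And>y. nonzero_pt d y \<Longrightarrow> mat_image (A y) = mat_kernel (Q y)"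
  shows "\<exists>r. \<forall>x. nonzero_pt d x \<longrightarrow> vec_space.rank m (A x) = r"
proof (cases "\<exists>x0::nat \<Rightarrow> 'a. nonzero_pt d x0")
  case True
  then obtain x0 :: "nat \<Rightarrow> 'a" where x0: "nonzero_pt d x0" by blast
  show ?thesis
    by (rule exI[of _ "vec_space.rank m (A x0)"])
      (use dir21_le[OF hA hQ ex] x0 in \<open>auto intro: antisym\<close>)
next
  case False
  then show ?thesis by blast
qed


definition ins :: "nat \<Rightarrow> nat \<Rightarrow> nat" where
  "ins a i = (if i < a then i else Suc i)"

lemma ins_less: "i < r \<Longrightarrow> a < Suc r \<Longrightarrow> ins a i < Suc r"
  unfolding ins_def by auto

lemma cofactor_mat:
  "cofactor (mat (Suc r) (Suc r) (\<lambda>(i,j). G i j)) a b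
     = (-1)^(a+b) * det (mat r r (\<lambda>(i,j). G (ins a i) (ins b j)))"
proof -
  have "mat_delete (mat (Suc r) (Suc r) (\<lambda>(i,j). G i j)) a b = mat r r (\<lambda>(i,j). G (ins a i) (ins b j))"
    unfolding mat_delete_def ins_def by (intro eq_matI) auto
  then show ?thesis unfolding cofactor_def by simp
qed

lemma minor_cong:
  assumes "\<And>i j. i < s \<Longrightarrow> j < s \<Longrightarrow> M $$ (f i, g j) = M' $$ (f' i, g' j)"
  shows "minor M f g s = minor M' f' g' s"
  unfolding minor_def using assms by (intro arg_cong[where f = det] eq_matI) auto

lemma minor_hom:
  assumes hA: "hom_symbol d k m n A" and f: "\<And>i. i < s \<Longrightarrow> f i < m" and g: "\<And>j. j < s \<Longrightarrow> g j < n"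
  shows "hom_poly_fun d (s * k) (\<lambda>\<xi>. minor (A \<xi>) f g s)"
  unfolding minor_def
  by (rule hom_det) (use hom_symbolD(2)[OF hA] f g in auto)

lemma aug_expand:
  fixes M :: "'a::comm_ring_1 mat"
  shows "det (mat (Suc r) (Suc r) (\<lambda>(a,b). if b < r then M $$ (F a, G b) else w $ (F a)))
    = (\<Sum>a<Suc r. w $ (F a) * ((-1)^(a+r) * minor M (\<lambda>i. F (ins a i)) G r))"
proof -
  let ?N = "mat (Suc r) (Suc r) (\<lambda>(a,b). if b < r then M $$ (F a, G b) else w $ (F a))"
  have "det ?N = (\<Sum>a<Suc r. ?N $$ (a, r) * cofactor ?N a r)"
    by (rule laplace_expansion_column) auto
  also have "\<dots> = (\<Sum>a<Suc r. w $ (F a) * ((-1)^(a+r) * minor M (\<lambda>i. F (ins a i)) G r))"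
  proof (rule sum.cong[OF refl])
    fix a assume a: "a \<in> {..<Suc r}"
    have "cofactor ?N a r = (-1)^(a+r) * det (mat r r (\<lambda>(i,j). if ins r j < r then M $$ (F (ins a i), G (ins r j)) else w $ (F (ins a i))))"
      by (rule cofactor_mat[where G = "\<lambda>a b. if b < r then M $$ (F a, G b) else w $ (F a)"])
    also have "mat r r (\<lambda>(i,j). if ins r j < r then M $$ (F (ins a i), G (ins r j)) else w $ (F (ins a i)))
      = mat r r (\<lambda>(i,j). M $$ (F (ins a i), G j))"
      by (intro eq_matI) (auto simp: ins_def)
    finally show "?N $$ (a, r) * cofactor ?N a r = w $ (F a) * ((-1)^(a+r) * minor M (\<lambda>i. F (ins a i)) G r)"
      using a unfolding minor_def by simp
  qed
  finally show ?thesis .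
qed

lemma constr_Q:
  fixes A :: "(nat \<Rightarrow> 'a::field) \<Rightarrow> 'a mat"
  assumes hA: "hom_symbol d k m n A"
    and rk: "\<And>x. nonzero_pt d x \<Longrightarrow> vec_space.rank m (A x) = r"
  shows "\<exists>q Q. hom_symbol d (r * k) q m Q \<and> (\<forall>y. nonzero_pt d y \<longrightarrow> mat_image (A y) = mat_kernel (Q y))"
proof -
  define IQ where "IQ = List.product (List.n_lists (Suc r) [0..<m]) (List.n_lists r [0..<n])"
  define q where "q = length IQ"
  define cq where "cq M fs gs a = (-1)^(a+r) * minor M (\<lambda>i. fs ! ins a i) (\<lambda>j. gs ! j) r"
    for M :: "'a mat" and fs gs :: "nat list" and a
  define Q where "Q \<xi> = mat q m (\<lambda>(c,j). \<Sum>a<Suc r. if fst (IQ ! c) ! a = j then cq (A \<xi>) (fst (IQ ! c)) (snd (IQ ! c)) a else 0)" for \<xi>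
  have Ac: "A y \<in> carrier_mat m n" for y using hom_symbolD(1)[OF hA] .
  have Qc: "Q y \<in> carrier_mat q m" for y unfolding Q_def by simp
  have IQc: "length (fst (IQ ! c)) = Suc r \<and> set (fst (IQ ! c)) \<subseteq> {0..<m} \<and> length (snd (IQ ! c)) = r \<and> set (snd (IQ ! c)) \<subseteq> {0..<n}"
    if "c < q" for c
  proof -
    have "IQ ! c \<in> set IQ" using that unfolding q_def by simp
    then show ?thesis unfolding IQ_def by (auto simp: set_n_lists)
  qed
  have fsm: "fst (IQ ! c) ! a < m" if "c < q" "a < Suc r" for c a
  proof -
    have "fst (IQ ! c) ! a \<in> set (fst (IQ ! c))" using IQc[OF that(1)] that(2) by (intro nth_mem) simp
    then show ?thesis using IQc[OF that(1)] by auto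
  qed
  have gsn: "snd (IQ ! c) ! j < n" if "c < q" "j < r" for c j
  proof -
    have "snd (IQ ! c) ! j \<in> set (snd (IQ ! c))" using IQc[OF that(1)] that(2) by (intro nth_mem) simp
    then show ?thesis using IQc[OF that(1)] by auto
  qed
  have hQ: "hom_symbol d (r * k) q m Q"
    unfolding hom_symbol_def
  proof (intro conjI allI impI)
    fix \<xi> show "Q \<xi> \<in> carrier_mat q m" by (rule Qc)
  next
    fix c j assume c: "c < q" and j: "j < m"
    have eq: "(\<lambda>\<xi>. Q \<xi> $$ (c, j)) = (\<lambda>\<xi>. \<Sum>a<Suc r. if fst (IQ ! c) ! a = j then cq (A \<xi>) (fst (IQ ! c)) (snd (IQ ! c)) a else 0)"
      using c j unfolding Q_def by auto
    show "hom_poly_fun d (r * k) (\<lambda>\<xi>. Q \<xi> $$ (c, j))"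
      unfolding eq
    proof (rule hom_sum)
      fix a assume a: "a \<in> {..<Suc r}"
      show "hom_poly_fun d (r * k) (\<lambda>\<xi>. if fst (IQ ! c) ! a = j then cq (A \<xi>) (fst (IQ ! c)) (snd (IQ ! c)) a else 0)"
      proof (cases "fst (IQ ! c) ! a = j")
        case True
        have "hom_poly_fun d (r * k) (\<lambda>\<xi>. minor (A \<xi>) (\<lambda>i. fst (IQ ! c) ! ins a i) (\<lambda>j. snd (IQ ! c) ! j) r)"
          by (rule minor_hom[OF hA]) (use fsm[OF c] gsn[OF c] ins_less a in auto)
        then show ?thesis using True unfolding cq_def by (simp add: hom_cmul)
      next
        case False then show ?thesis by (simp add: hom_zero)
      qed
    qed simp
  qed
  have expand: "(Q y *\<^sub>v w) $ c = det (mat (Suc r) (Suc r) (\<lambda>(a,b). if b < r then A y $$ (fst (IQ ! c) ! a, snd (IQ ! c) ! b) else w $ (fst (IQ ! c) ! a)))"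
    if c: "c < q" and w: "w \<in> carrier_vec m" for y w c
  proof -
    let ?fs = "fst (IQ ! c)" and ?gs = "snd (IQ ! c)"
    have "(Q y *\<^sub>v w) $ c = (\<Sum>j<m. w $ j * (\<Sum>a<Suc r. if ?fs ! a = j then cq (A y) ?fs ?gs a else 0))"
      using c w unfolding Q_def by (simp add: scalar_prod_def atLeast0LessThan mult.commute)
    also have "\<dots> = (\<Sum>a<Suc r. w $ (?fs ! a) * cq (A y) ?fs ?gs a)"
      by (rule sum_embed) (use fsm[OF c] in auto)
    also have "\<dots> = det (mat (Suc r) (Suc r) (\<lambda>(a,b). if b < r then A y $$ (?fs ! a, ?gs ! b) else w $ (?fs ! a)))"
      unfolding aug_expand[where F = "\<lambda>a. ?fs ! a" and G = "\<lambda>b. ?gs ! b"] cq_def by simp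
    finally show ?thesis .
  qed
  have exact: "mat_image (A y) = mat_kernel (Q y)" if y: "nonzero_pt d y" for y
  proof
    show "mat_image (A y) \<subseteq> mat_kernel (Q y)"
    proof
      fix w assume "w \<in> mat_image (A y)"
      then obtain u where u: "u \<in> carrier_vec n" and wu: "w = A y *\<^sub>v u" unfolding mat_image_def using Ac[of y] by auto
      have w: "w \<in> carrier_vec m" using wu Ac[of y] u by simp
      have "Q y *\<^sub>v w = 0\<^sub>v q"
      proof (rule eq_vecI)
        fix c assume "c < dim_vec (0\<^sub>v q :: 'a vec)" hence c: "c < q" by simp
        let ?fs = "fst (IQ ! c)" and ?gs = "snd (IQ ! c)"
        let ?cq = "\<lambda>a. (-1)^(a+r) * minor (A y) (\<lambda>i. ?fs ! ins a i) (\<lambda>j. ?gs ! j) r"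
        have "(Q y *\<^sub>v w) $ c = (\<Sum>a<Suc r. w $ (?fs ! a) * ?cq a)"
          unfolding expand[OF c w] aug_expand ..
        also have "\<dots> = (\<Sum>a<Suc r. (\<Sum>l<n. A y $$ (?fs ! a, l) * u $ l) * ?cq a)"
          by (rule sum.cong[OF refl]) (use wu u Ac[of y] fsm[OF c] in \<open>auto simp: scalar_prod_def atLeast0LessThan\<close>)
        also have "\<dots> = (\<Sum>l<n. u $ l * (\<Sum>a<Suc r. (col (A y) l) $ (?fs ! a) * ?cq a))"
          unfolding sum_distrib_right sum_distrib_left
          by (subst sum.swap) (intro sum.cong refl, use Ac[of y] fsm[OF c] in auto)
        also have "\<dots> = (\<Sum>l<n. u $ l * minor (A y) (\<lambda>a. ?fs ! a) (snoc_i r (\<lambda>b. ?gs ! b) l) (Suc r))"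
        proof (rule sum.cong[OF refl])
          fix l assume l: "l \<in> {..<n}"
          have "(\<Sum>a<Suc r. (col (A y) l) $ (?fs ! a) * ?cq a)
            = det (mat (Suc r) (Suc r) (\<lambda>(a,b). if b < r then A y $$ (?fs ! a, ?gs ! b) else (col (A y) l) $ (?fs ! a)))"
            unfolding aug_expand ..
          also have "\<dots> = minor (A y) (\<lambda>a. ?fs ! a) (snoc_i r (\<lambda>b. ?gs ! b) l) (Suc r)"
            unfolding minor_def using Ac[of y] fsm[OF c] l
            by (intro arg_cong[where f = det] eq_matI) (auto simp: snoc_i_def)
          finally show "u $ l * (\<Sum>a<Suc r. (col (A y) l) $ (?fs ! a) * ?cq a) = u $ l * minor (A y) (\<lambda>a. ?fs ! a) (snoc_i r (\<lambda>b. ?gs ! b) l) (Suc r)"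
            by simp
        qed
        also have "\<dots> = 0"
        proof (rule sum.neutral, rule ballI)
          fix l assume l: "l \<in> {..<n}"
          have "minor (A y) (\<lambda>a. ?fs ! a) (snoc_i r (\<lambda>b. ?gs ! b) l) (Suc r) = 0"
            by (rule vec_space.minor_above_rank[OF Ac])
              (use fsm[OF c] gsn[OF c] l Ac[of y] rk[OF y] in \<open>auto simp: inr_def snoc_i_def\<close>)
          then show "u $ l * minor (A y) (\<lambda>a. ?fs ! a) (snoc_i r (\<lambda>b. ?gs ! b) l) (Suc r) = 0" by simp
        qed
        finally show "(Q y *\<^sub>v w) $ c = 0\<^sub>v q $ c" using c by simp
      qed (use Qc[of y] in simp)
      then show "w \<in> mat_kernel (Q y)" by (rule mat_kernelI[OF Qc w])
    qed
  next
    show "mat_kernel (Q y) \<subseteq> mat_image (A y)"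
    proof
      fix w assume "w \<in> mat_kernel (Q y)"
      then have w: "w \<in> carrier_vec m" and Qw: "Q y *\<^sub>v w = 0\<^sub>v q" using mat_kernelD[OF Qc] by auto
      obtain f0 g0 where fg0: "inr (A y) f0 g0 r" "minor (A y) f0 g0 r \<noteq> 0"
        using vec_space.rank_minor_exists[OF Ac[of y]] rk[OF y] by metis
      have f0m: "f0 i < m" if "i < r" for i using fg0(1) Ac[of y] that unfolding inr_def by auto
      have g0n: "g0 j < n" if "j < r" for j using fg0(1) Ac[of y] that unfolding inr_def by auto
      have g0n': "g0 j < Suc n" if "j < r" for j using g0n[OF that] by simp
      define M' where "M' = mat m (Suc n) (\<lambda>(i,j). if j < n then A y $$ (i,j) else w $ i)"
      have M': "M' \<in> carrier_mat m (Suc n)" unfolding M'_def by simp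
      have inr': "inr M' f0 g0 r" using f0m g0n unfolding inr_def M'_def by (auto intro: less_SucI)
      have nz': "minor M' f0 g0 r \<noteq> 0"
      proof -
        have "minor M' f0 g0 r = minor (A y) f0 g0 r"
          by (rule minor_cong) (use f0m g0n g0n' in \<open>auto simp: M'_def\<close>)
        then show ?thesis using fg0(2) by simp
      qed
      have z: "minor M' (cons_i i f0) (snoc_i r g0 n) (Suc r) = 0" if i: "i < m" for i
      proof -
        define fs where "fs = map (cons_i i f0) [0..<Suc r]"
        define gs where "gs = map g0 [0..<r]"
        have "fs \<in> set (List.n_lists (Suc r) [0..<m])" unfolding set_n_lists fs_def
          using i f0m by (auto simp: cons_i_def)
        moreover have "gs \<in> set (List.n_lists r [0..<n])" unfolding set_n_lists gs_def
          using g0n by auto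
        ultimately have "(fs, gs) \<in> set IQ" unfolding IQ_def by simp
        then obtain c where c: "c < q" "IQ ! c = (fs, gs)" unfolding q_def by (metis in_set_conv_nth)
        have "0 = (Q y *\<^sub>v w) $ c" using Qw c by simp
        also have "\<dots> = det (mat (Suc r) (Suc r) (\<lambda>(a,b). if b < r then A y $$ (fs ! a, gs ! b) else w $ (fs ! a)))"
          using expand[OF c(1) w, of y, unfolded c(2) fst_conv snd_conv] by simp
        also have "\<dots> = minor M' (cons_i i f0) (snoc_i r g0 n) (Suc r)"
          unfolding minor_def using i f0m g0n g0n'
          by (intro arg_cong[where f = det] eq_matI)
            (auto simp: M'_def fs_def gs_def snoc_i_def cons_i_def nth_append less_Suc_eq)
        finally show ?thesis by simp
      qed
      obtain cc where cc: "\<forall>i<m. M' $$ (i, n) = (\<Sum>k<r. cc k * M' $$ (i, g0 k))"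
        using cramer_col[OF M' inr' nz' _ z] by blast
      define u where "u = vec n (\<lambda>l. \<Sum>k<r. if g0 k = l then cc k else 0)"
      have u: "u \<in> carrier_vec n" unfolding u_def by simp
      have "w = A y *\<^sub>v u"
      proof (rule eq_vecI)
        fix i assume "i < dim_vec (A y *\<^sub>v u)" hence i: "i < m" using Ac[of y] by simp
        have "(A y *\<^sub>v u) $ i = (\<Sum>l<n. A y $$ (i, l) * (\<Sum>k<r. if g0 k = l then cc k else 0))"
          using i Ac[of y] unfolding u_def by (simp add: scalar_prod_def atLeast0LessThan)
        also have "\<dots> = (\<Sum>k<r. A y $$ (i, g0 k) * cc k)" by (rule sum_embed) (use g0n in auto)
        also have "\<dots> = (\<Sum>k<r. cc k * M' $$ (i, g0 k))"
          by (rule sum.cong[OF refl]) (use i g0n g0n' in \<open>auto simp: M'_def\<close>)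
        also have "\<dots> = M' $$ (i, n)" using cc i by simp
        also have "\<dots> = w $ i" using i unfolding M'_def by simp
        finally show "w $ i = (A y *\<^sub>v u) $ i" by simp
      qed (use w Ac[of y] in simp)
      then show "w \<in> mat_image (A y)" unfolding mat_image_def using u Ac[of y] by auto
    qed
  qed
  show ?thesis using hQ exact by blast
qed


lemma row0_expand:
  fixes M :: "'a::comm_ring_1 mat"
  shows "det (mat (Suc r) (Suc r) (\<lambda>(a,b). M $$ (cons_i i F a, G b)))
    = (\<Sum>b<Suc r. M $$ (i, G b) * ((-1)^b * minor M F (\<lambda>j. G (ins b j)) r))"
proof -
  let ?N = "mat (Suc r) (Suc r) (\<lambda>(a,b). M $$ (cons_i i F a, G b))"
  have "det ?N = (\<Sum>b<Suc r. ?N $$ (0, b) * cofactor ?N 0 b)"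
    by (rule laplace_expansion_row) auto
  also have "\<dots> = (\<Sum>b<Suc r. M $$ (i, G b) * ((-1)^b * minor M F (\<lambda>j. G (ins b j)) r))"
  proof (rule sum.cong[OF refl])
    fix b assume b: "b \<in> {..<Suc r}"
    have "cofactor ?N 0 b = (-1)^(0+b) * det (mat r r (\<lambda>(i',j). M $$ (cons_i i F (ins 0 i'), G (ins b j))))"
      by (rule cofactor_mat[where G = "\<lambda>a b. M $$ (cons_i i F a, G b)"])
    also have "mat r r (\<lambda>(i',j). M $$ (cons_i i F (ins 0 i'), G (ins b j))) = mat r r (\<lambda>(i',j). M $$ (F i', G (ins b j)))"
      by (intro eq_matI) (auto simp: ins_def cons_i_def)
    finally show "?N $$ (0, b) * cofactor ?N 0 b = M $$ (i, G b) * ((-1)^b * minor M F (\<lambda>j. G (ins b j)) r)"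
      using b unfolding minor_def by (simp add: cons_i_def)
  qed
  finally show ?thesis .
qed

lemma constr_B:
  fixes A :: "(nat \<Rightarrow> 'a::field) \<Rightarrow> 'a mat"
  assumes hA: "hom_symbol d k m n A"
    and rk: "\<And>x. nonzero_pt d x \<Longrightarrow> vec_space.rank m (A x) = r"
  shows "\<exists>p B. hom_symbol d (r * k) n p B \<and> (\<forall>y. nonzero_pt d y \<longrightarrow> mat_image (B y) = mat_kernel (A y))"
proof -
  define IB where "IB = List.product (List.n_lists r [0..<m]) (List.n_lists (Suc r) [0..<n])"
  define p where "p = length IB"
  define cb where "cb M fs gs kk = (-1)^kk * minor M (\<lambda>i. fs ! i) (\<lambda>j. gs ! ins kk j) r"
    for M :: "'a mat" and fs gs :: "nat list" and kk
  define B where "B \<xi> = mat n p (\<lambda>(l,c). \<Sum>kk<Suc r. if snd (IB ! c) ! kk = l then cb (A \<xi>) (fst (IB ! c)) (snd (IB ! c)) kk else 0)" for \<xi>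
  have Ac: "A y \<in> carrier_mat m n" for y using hom_symbolD(1)[OF hA] .
  have Bc: "B y \<in> carrier_mat n p" for y unfolding B_def by simp
  have IBc: "length (fst (IB ! c)) = r \<and> set (fst (IB ! c)) \<subseteq> {0..<m} \<and> length (snd (IB ! c)) = Suc r \<and> set (snd (IB ! c)) \<subseteq> {0..<n}"
    if "c < p" for c
  proof -
    have "IB ! c \<in> set IB" using that unfolding p_def by simp
    then show ?thesis unfolding IB_def by (auto simp: set_n_lists)
  qed
  have fsm: "fst (IB ! c) ! a < m" if "c < p" "a < r" for c a
  proof -
    have "fst (IB ! c) ! a \<in> set (fst (IB ! c))" using IBc[OF that(1)] that(2) by (intro nth_mem) simp
    then show ?thesis using IBc[OF that(1)] by auto
  qed
  have gsn: "snd (IB ! c) ! j < n" if "c < p" "j < Suc r" for c j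
  proof -
    have "snd (IB ! c) ! j \<in> set (snd (IB ! c))" using IBc[OF that(1)] that(2) by (intro nth_mem) simp
    then show ?thesis using IBc[OF that(1)] by auto
  qed
  have hB: "hom_symbol d (r * k) n p B"
    unfolding hom_symbol_def
  proof (intro conjI allI impI)
    fix \<xi> show "B \<xi> \<in> carrier_mat n p" by (rule Bc)
  next
    fix l c assume l: "l < n" and c: "c < p"
    have eq: "(\<lambda>\<xi>. B \<xi> $$ (l, c)) = (\<lambda>\<xi>. \<Sum>kk<Suc r. if snd (IB ! c) ! kk = l then cb (A \<xi>) (fst (IB ! c)) (snd (IB ! c)) kk else 0)"
      using c l unfolding B_def by auto
    show "hom_poly_fun d (r * k) (\<lambda>\<xi>. B \<xi> $$ (l, c))"
      unfolding eq
    proof (rule hom_sum)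
      fix kk assume kk: "kk \<in> {..<Suc r}"
      show "hom_poly_fun d (r * k) (\<lambda>\<xi>. if snd (IB ! c) ! kk = l then cb (A \<xi>) (fst (IB ! c)) (snd (IB ! c)) kk else 0)"
      proof (cases "snd (IB ! c) ! kk = l")
        case True
        have "hom_poly_fun d (r * k) (\<lambda>\<xi>. minor (A \<xi>) (\<lambda>i. fst (IB ! c) ! i) (\<lambda>j. snd (IB ! c) ! ins kk j) r)"
          by (rule minor_hom[OF hA]) (use fsm[OF c] gsn[OF c] ins_less kk in auto)
        then show ?thesis using True unfolding cb_def by (simp add: hom_cmul)
      next
        case False then show ?thesis by (simp add: hom_zero)
      qed
    qed simp
  qed
  have AB: "A y * B y = 0\<^sub>m m p" if y: "nonzero_pt d y" for y
  proof (rule eq_matI)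
    fix i c assume "i < dim_row (0\<^sub>m m p :: 'a mat)" "c < dim_col (0\<^sub>m m p :: 'a mat)"
    then have i: "i < m" and c: "c < p" by auto
    let ?fs = "fst (IB ! c)" and ?gs = "snd (IB ! c)"
    have "(A y * B y) $$ (i, c) = (\<Sum>l<n. A y $$ (i, l) * (\<Sum>kk<Suc r. if ?gs ! kk = l then cb (A y) ?fs ?gs kk else 0))"
      using i c Ac[of y] Bc[of y] unfolding B_def by (simp add: scalar_prod_def atLeast0LessThan)
    also have "\<dots> = (\<Sum>kk<Suc r. A y $$ (i, ?gs ! kk) * cb (A y) ?fs ?gs kk)"
      by (rule sum_embed) (use gsn[OF c] in auto)
    also have "\<dots> = det (mat (Suc r) (Suc r) (\<lambda>(a,b). A y $$ (cons_i i (\<lambda>a. ?fs ! a) a, ?gs ! b)))"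
      unfolding row0_expand cb_def ..
    also have "\<dots> = minor (A y) (cons_i i (\<lambda>a. ?fs ! a)) (\<lambda>b. ?gs ! b) (Suc r)"
      unfolding minor_def ..
    also have "\<dots> = 0"
      by (rule vec_space.minor_above_rank[OF Ac])
        (use fsm[OF c] gsn[OF c] i Ac[of y] rk[OF y] in \<open>auto simp: inr_def cons_i_def\<close>)
    finally show "(A y * B y) $$ (i, c) = 0\<^sub>m m p $$ (i, c)" using i c by simp
  qed (use Ac Bc in auto)
  have ABu: "A y *\<^sub>v (B y *\<^sub>v u) = 0\<^sub>v m" if y: "nonzero_pt d y" and u: "u \<in> carrier_vec p" for y u
  proof -
    have "A y *\<^sub>v (B y *\<^sub>v u) = (A y * B y) *\<^sub>v u" by (rule assoc_mult_mat_vec[symmetric, OF Ac Bc u])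
    also have "\<dots> = 0\<^sub>m m p *\<^sub>v u" using AB[OF y] by simp
    also have "\<dots> = 0\<^sub>v m" using u by (intro eq_vecI) auto
    finally show ?thesis .
  qed
  have exact: "mat_image (B y) = mat_kernel (A y)" if y: "nonzero_pt d y" for y
  proof
    show "mat_image (B y) \<subseteq> mat_kernel (A y)"
    proof
      fix w assume "w \<in> mat_image (B y)"
      then obtain u where u: "u \<in> carrier_vec p" and wu: "w = B y *\<^sub>v u" unfolding mat_image_def using Bc[of y] by auto
      have w: "w \<in> carrier_vec n" using wu Bc[of y] u by simp
      show "w \<in> mat_kernel (A y)" by (rule mat_kernelI[OF Ac w]) (use ABu[OF y u] wu in simp)
    qed
  next
    show "mat_kernel (A y) \<subseteq> mat_image (B y)"
    proof
      fix x assume "x \<in> mat_kernel (A y)"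
      then have x: "x \<in> carrier_vec n" and Ax: "A y *\<^sub>v x = 0\<^sub>v m" using mat_kernelD[OF Ac] by auto
      obtain f0 g0 where fg0: "inr (A y) f0 g0 r" "minor (A y) f0 g0 r \<noteq> 0"
        using vec_space.rank_minor_exists[OF Ac[of y]] rk[OF y] by metis
      define \<Delta> where "\<Delta> = minor (A y) f0 g0 r"
      have \<Delta>: "\<Delta> \<noteq> 0" using fg0(2) unfolding \<Delta>_def .
      have f0m: "f0 i < m" if "i < r" for i using fg0(1) Ac[of y] that unfolding inr_def by auto
      have g0n: "g0 j < n" if "j < r" for j using fg0(1) Ac[of y] that unfolding inr_def by auto
      define fs0 where "fs0 = map f0 [0..<r]"
      define gsl where "gsl l = l # map g0 [0..<r]" for l
      have inIB: "\<exists>c. c < p \<and> IB ! c = (fs0, gsl l)" if l: "l < n" for l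
      proof -
        have "fs0 \<in> set (List.n_lists r [0..<m])" unfolding set_n_lists fs0_def using f0m by auto
        moreover have "gsl l \<in> set (List.n_lists (Suc r) [0..<n])" unfolding set_n_lists gsl_def
          using g0n l by auto
        ultimately have "(fs0, gsl l) \<in> set IB" unfolding IB_def by simp
        then show ?thesis unfolding p_def by (metis in_set_conv_nth)
      qed
      have "\<forall>l. \<exists>c. l < n \<longrightarrow> c < p \<and> IB ! c = (fs0, gsl l)" using inIB by blast
      from choice[OF this] obtain cl where cl: "\<And>l. l < n \<Longrightarrow> cl l < p \<and> IB ! (cl l) = (fs0, gsl l)" by blast
      define e where "e l kk = cb (A y) fs0 (gsl l) (Suc kk)" for l kk
      have Bcol: "B y $$ (l', cl l) = (if l = l' then \<Delta> else 0) + (\<Sum>kk<r. if g0 kk = l' then e l kk else 0)"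
        if l': "l' < n" and l: "l < n" for l' l
      proof -
        have clp: "cl l < p" and clI: "IB ! cl l = (fs0, gsl l)" using cl[OF l] by auto
        have "B y $$ (l', cl l) = (\<Sum>kk<Suc r. if snd (IB ! cl l) ! kk = l' then cb (A y) (fst (IB ! cl l)) (snd (IB ! cl l)) kk else 0)"
          using clp l' unfolding B_def by simp
        also have "\<dots> = (\<Sum>kk<Suc r. if gsl l ! kk = l' then cb (A y) fs0 (gsl l) kk else 0)"
          unfolding clI fst_conv snd_conv ..
        also have "\<dots> = (if gsl l ! 0 = l' then cb (A y) fs0 (gsl l) 0 else 0) + (\<Sum>kk<r. if gsl l ! Suc kk = l' then cb (A y) fs0 (gsl l) (Suc kk) else 0)"
          by (rule sum.lessThan_Suc_shift)
        also have "cb (A y) fs0 (gsl l) 0 = \<Delta>"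
          unfolding cb_def \<Delta>_def by (simp, rule minor_cong) (auto simp: fs0_def gsl_def ins_def)
        also have "(\<Sum>kk<r. if gsl l ! Suc kk = l' then cb (A y) fs0 (gsl l) (Suc kk) else 0) = (\<Sum>kk<r. if g0 kk = l' then e l kk else 0)"
          by (rule sum.cong[OF refl]) (auto simp: gsl_def e_def)
        finally show ?thesis unfolding gsl_def by simp
      qed
      define u where "u = vec p (\<lambda>c. \<Sum>l<n. if cl l = c then x $ l / \<Delta> else 0)"
      have u: "u \<in> carrier_vec p" unfolding u_def by simp
      define ee where "ee kk = (\<Sum>l<n. e l kk * (x $ l / \<Delta>))" for kk
      have Bu: "(B y *\<^sub>v u) $ l' = x $ l' + (\<Sum>kk<r. if g0 kk = l' then ee kk else 0)" if l': "l' < n" for l'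
      proof -
        have "(B y *\<^sub>v u) $ l' = (\<Sum>c<p. B y $$ (l', c) * (\<Sum>l<n. if cl l = c then x $ l / \<Delta> else 0))"
          using l' Bc[of y] unfolding u_def by (simp add: scalar_prod_def atLeast0LessThan)
        also have "\<dots> = (\<Sum>l<n. B y $$ (l', cl l) * (x $ l / \<Delta>))"
          by (rule sum_embed) (use cl in auto)
        also have "\<dots> = (\<Sum>l<n. (if l = l' then \<Delta> else 0) * (x $ l / \<Delta>)) + (\<Sum>l<n. (\<Sum>kk<r. if g0 kk = l' then e l kk else 0) * (x $ l / \<Delta>))"
          unfolding sum.distrib[symmetric] by (rule sum.cong[OF refl]) (simp only: Bcol[OF l'] lessThan_iff distrib_right)
        also have "(\<Sum>l<n. (if l = l' then \<Delta> else 0) * (x $ l / \<Delta>)) = x $ l'"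
        proof -
          have "(\<Sum>l<n. (if l = l' then \<Delta> else 0) * (x $ l / \<Delta>)) = (\<Sum>l<n. if l = l' then \<Delta> * (x $ l / \<Delta>) else 0)"
            by (rule sum.cong) auto
          also have "\<dots> = \<Delta> * (x $ l' / \<Delta>)" using l' by (simp add: sum.delta)
          also have "\<dots> = x $ l'" using \<Delta> by simp
          finally show ?thesis .
        qed
        also have "(\<Sum>l<n. (\<Sum>kk<r. if g0 kk = l' then e l kk else 0) * (x $ l / \<Delta>)) = (\<Sum>kk<r. if g0 kk = l' then ee kk else 0)"
          unfolding ee_def sum_distrib_right
          by (subst sum.swap) (intro sum.cong refl, auto)
        finally show ?thesis .
      qed
      have Bud: "B y *\<^sub>v u \<in> carrier_vec n" using Bc[of y] u by simp
      have ee0: "(\<Sum>kk<r. A y $$ (i, g0 kk) * ee kk) = 0" if i: "i < m" for i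
      proof -
        define bu where "bu = B y *\<^sub>v u"
        have bud: "bu \<in> carrier_vec n" unfolding bu_def by (rule Bud)
        have "0 = (A y *\<^sub>v bu) $ i" using ABu[OF y u] i unfolding bu_def by simp
        also have "\<dots> = (\<Sum>l'<n. A y $$ (i, l') * bu $ l')"
          using i Ac[of y] bud by (simp add: scalar_prod_def atLeast0LessThan)
        also have "\<dots> = (\<Sum>l'<n. A y $$ (i, l') * (x $ l' + (\<Sum>kk<r. if g0 kk = l' then ee kk else 0)))"
          by (rule sum.cong[OF refl]) (simp add: bu_def Bu)
        also have "\<dots> = (\<Sum>l'<n. A y $$ (i, l') * x $ l') + (\<Sum>l'<n. A y $$ (i, l') * (\<Sum>kk<r. if g0 kk = l' then ee kk else 0))"
          by (simp add: distrib_left sum.distrib)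
        also have "(\<Sum>l'<n. A y $$ (i, l') * x $ l') = (A y *\<^sub>v x) $ i"
          using i Ac[of y] x by (simp add: scalar_prod_def atLeast0LessThan)
        also have "\<dots> = 0" using Ax i by simp
        also have "(\<Sum>l'<n. A y $$ (i, l') * (\<Sum>kk<r. if g0 kk = l' then ee kk else 0)) = (\<Sum>kk<r. A y $$ (i, g0 kk) * ee kk)"
          by (rule sum_embed) (use g0n in auto)
        finally show ?thesis by simp
      qed
      define S where "S = mat r r (\<lambda>(a,kk). A y $$ (f0 a, g0 kk))"
      have S: "S \<in> carrier_mat r r" unfolding S_def by simp
      have "S *\<^sub>v vec r ee = 0\<^sub>v r"
      proof (rule eq_vecI)
        fix a assume "a < dim_vec (0\<^sub>v r :: 'a vec)" hence a: "a < r" by simp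
        have "(S *\<^sub>v vec r ee) $ a = (\<Sum>kk<r. A y $$ (f0 a, g0 kk) * ee kk)"
          unfolding S_def using a by (simp add: scalar_prod_def atLeast0LessThan)
        also have "\<dots> = 0" using ee0 f0m a by simp
        finally show "(S *\<^sub>v vec r ee) $ a = 0\<^sub>v r $ a" using a by simp
      qed (use S in simp)
      moreover have "det S \<noteq> 0" using \<Delta> unfolding \<Delta>_def minor_def S_def .
      moreover have "vec r ee \<in> carrier_vec r" by simp
      ultimately have "vec r ee = 0\<^sub>v r" using det_0_iff_vec_prod_zero_field[OF S] by blast
      then have eez: "ee kk = 0" if "kk < r" for kk using that by (metis index_vec index_zero_vec(1))
      have "x = B y *\<^sub>v u"
      proof (rule eq_vecI)
        fix l' assume "l' < dim_vec (B y *\<^sub>v u)" hence l': "l' < n" using Bc[of y] by simp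
        have "(\<Sum>kk<r. if g0 kk = l' then ee kk else 0) = 0" using eez by (intro sum.neutral) auto
        then show "x $ l' = (B y *\<^sub>v u) $ l'" unfolding Bu[OF l'] by simp
      qed (use x Bc[of y] in simp)
      then show "x \<in> mat_image (B y)" unfolding mat_image_def using u Bc[of y] by auto
    qed
  qed
  show ?thesis using hB exact by blast
qed


lemma main_generic:
  shows "\<forall>(d::nat) (k::nat) (m::nat) (n::nat) (A :: (nat \<Rightarrow> 'a::field_char_0) \<Rightarrow> 'a mat).
     hom_symbol d k m n A \<longrightarrow>
     (((\<exists>r::nat. \<forall>x::nat \<Rightarrow> 'a. nonzero_pt d x \<longrightarrow> vec_space.rank m (A x) = r)
        \<longleftrightarrow>
       (\<exists>(p::nat) (q::nat) (kB::nat) (kQ::nat)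
          (B :: (nat \<Rightarrow> 'a) \<Rightarrow> 'a mat) (Q :: (nat \<Rightarrow> 'a) \<Rightarrow> 'a mat).
          hom_symbol d kB n p B \<and> hom_symbol d kQ q m Q \<and>
          (\<forall>y::nat \<Rightarrow> 'a. nonzero_pt d y \<longrightarrow>
              mat_image (B y) = mat_kernel (A y) \<and> mat_image (A y) = mat_kernel (Q y))))
      \<and>
      (\<forall>r::nat. (\<forall>x::nat \<Rightarrow> 'a. nonzero_pt d x \<longrightarrow> vec_space.rank m (A x) = r) \<longrightarrow>
         (\<exists>(p::nat) (q::nat)
            (B :: (nat \<Rightarrow> 'a) \<Rightarrow> 'a mat) (Q :: (nat \<Rightarrow> 'a) \<Rightarrow> 'a mat).
            hom_symbol d (r * k) n p B \<and> hom_symbol d (r * k) q m Q \<and>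
            (\<forall>y::nat \<Rightarrow> 'a. nonzero_pt d y \<longrightarrow>
               mat_image (B y) = mat_kernel (A y) \<and> mat_image (A y) = mat_kernel (Q y)))))"
proof (intro allI impI)
  fix d k m n and A :: "(nat \<Rightarrow> 'a) \<Rightarrow> 'a mat"
  assume hA: "hom_symbol d k m n A"
  have constr: "\<exists>(p::nat) (q::nat) (B :: (nat \<Rightarrow> 'a) \<Rightarrow> 'a mat) (Q :: (nat \<Rightarrow> 'a) \<Rightarrow> 'a mat).
            hom_symbol d (r * k) n p B \<and> hom_symbol d (r * k) q m Q \<and>
            (\<forall>y::nat \<Rightarrow> 'a. nonzero_pt d y \<longrightarrow>
               mat_image (B y) = mat_kernel (A y) \<and> mat_image (A y) = mat_kernel (Q y))"
    if rk: "\<forall>x::nat \<Rightarrow> 'a. nonzero_pt d x \<longrightarrow> vec_space.rank m (A x) = r" for r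
  proof -
    obtain p B where B: "hom_symbol d (r * k) n p B" "\<forall>y. nonzero_pt d y \<longrightarrow> mat_image (B y) = mat_kernel (A y)"
      using constr_B[OF hA, of r] rk by blast
    obtain q Q where Q: "hom_symbol d (r * k) q m Q" "\<forall>y. nonzero_pt d y \<longrightarrow> mat_image (A y) = mat_kernel (Q y)"
      using constr_Q[OF hA, of r] rk by blast
    show ?thesis using B Q by blast
  qed
  show "((\<exists>r::nat. \<forall>x::nat \<Rightarrow> 'a. nonzero_pt d x \<longrightarrow> vec_space.rank m (A x) = r)
        \<longleftrightarrow>
       (\<exists>(p::nat) (q::nat) (kB::nat) (kQ::nat)
          (B :: (nat \<Rightarrow> 'a) \<Rightarrow> 'a mat) (Q :: (nat \<Rightarrow> 'a) \<Rightarrow> 'a mat).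
          hom_symbol d kB n p B \<and> hom_symbol d kQ q m Q \<and>
          (\<forall>y::nat \<Rightarrow> 'a. nonzero_pt d y \<longrightarrow>
              mat_image (B y) = mat_kernel (A y) \<and> mat_image (A y) = mat_kernel (Q y))))
      \<and>
      (\<forall>r::nat. (\<forall>x::nat \<Rightarrow> 'a. nonzero_pt d x \<longrightarrow> vec_space.rank m (A x) = r) \<longrightarrow>
         (\<exists>(p::nat) (q::nat)
            (B :: (nat \<Rightarrow> 'a) \<Rightarrow> 'a mat) (Q :: (nat \<Rightarrow> 'a) \<Rightarrow> 'a mat).
            hom_symbol d (r * k) n p B \<and> hom_symbol d (r * k) q m Q \<and>
            (\<forall>y::nat \<Rightarrow> 'a. nonzero_pt d y \<longrightarrow>
               mat_image (B y) = mat_kernel (A y) \<and> mat_image (A y) = mat_kernel (Q y))))"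
  proof (intro conjI iffI allI impI)
    assume "\<exists>r::nat. \<forall>x::nat \<Rightarrow> 'a. nonzero_pt d x \<longrightarrow> vec_space.rank m (A x) = r"
    then obtain r where "\<forall>x::nat \<Rightarrow> 'a. nonzero_pt d x \<longrightarrow> vec_space.rank m (A x) = r" by blast
    from constr[OF this] show "\<exists>(p::nat) (q::nat) (kB::nat) (kQ::nat)
          (B :: (nat \<Rightarrow> 'a) \<Rightarrow> 'a mat) (Q :: (nat \<Rightarrow> 'a) \<Rightarrow> 'a mat).
          hom_symbol d kB n p B \<and> hom_symbol d kQ q m Q \<and>
          (\<forall>y::nat \<Rightarrow> 'a. nonzero_pt d y \<longrightarrow>
              mat_image (B y) = mat_kernel (A y) \<and> mat_image (A y) = mat_kernel (Q y))" by blast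
  next
    assume "\<exists>(p::nat) (q::nat) (kB::nat) (kQ::nat)
          (B :: (nat \<Rightarrow> 'a) \<Rightarrow> 'a mat) (Q :: (nat \<Rightarrow> 'a) \<Rightarrow> 'a mat).
          hom_symbol d kB n p B \<and> hom_symbol d kQ q m Q \<and>
          (\<forall>y::nat \<Rightarrow> 'a. nonzero_pt d y \<longrightarrow>
              mat_image (B y) = mat_kernel (A y) \<and> mat_image (A y) = mat_kernel (Q y))"
    then obtain q kQ and Q :: "(nat \<Rightarrow> 'a) \<Rightarrow> 'a mat" where
      hQ: "hom_symbol d kQ q m Q" and ex: "\<And>y. nonzero_pt d y \<Longrightarrow> mat_image (A y) = mat_kernel (Q y)"
      by blast
    show "\<exists>r::nat. \<forall>x::nat \<Rightarrow> 'a. nonzero_pt d x \<longrightarrow> vec_space.rank m (A x) = r"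
      by (rule dir21[OF hA hQ ex])
  next
    fix r assume "\<forall>x::nat \<Rightarrow> 'a. nonzero_pt d x \<longrightarrow> vec_space.rank m (A x) = r"
    from constr[OF this] show "\<exists>(p::nat) (q::nat)
            (B :: (nat \<Rightarrow> 'a) \<Rightarrow> 'a mat) (Q :: (nat \<Rightarrow> 'a) \<Rightarrow> 'a mat).
            hom_symbol d (r * k) n p B \<and> hom_symbol d (r * k) q m Q \<and>
            (\<forall>y::nat \<Rightarrow> 'a. nonzero_pt d y \<longrightarrow>
               mat_image (B y) = mat_kernel (A y) \<and> mat_image (A y) = mat_kernel (Q y))" .
  qed
qed

theorem theorem2p2:
  shows
  "(\<forall>(d::nat) (k::nat) (m::nat) (n::nat) (A :: (nat \<Rightarrow> real) \<Rightarrow> real mat).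
     hom_symbol d k m n A \<longrightarrow>
     (((\<exists>r::nat. \<forall>x::nat \<Rightarrow> real. nonzero_pt d x \<longrightarrow> vec_space.rank m (A x) = r)
        \<longleftrightarrow>
       (\<exists>(p::nat) (q::nat) (kB::nat) (kQ::nat)
          (B :: (nat \<Rightarrow> real) \<Rightarrow> real mat) (Q :: (nat \<Rightarrow> real) \<Rightarrow> real mat).
          hom_symbol d kB n p B \<and> hom_symbol d kQ q m Q \<and>
          (\<forall>y::nat \<Rightarrow> real. nonzero_pt d y \<longrightarrow>
              mat_image (B y) = mat_kernel (A y) \<and> mat_image (A y) = mat_kernel (Q y))))
      \<and>
      (\<forall>r::nat. (\<forall>x::nat \<Rightarrow> real. nonzero_pt d x \<longrightarrow> vec_space.rank m (A x) = r) \<longrightarrow>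
         (\<exists>(p::nat) (q::nat)
            (B :: (nat \<Rightarrow> real) \<Rightarrow> real mat) (Q :: (nat \<Rightarrow> real) \<Rightarrow> real mat).
            hom_symbol d (r * k) n p B \<and> hom_symbol d (r * k) q m Q \<and>
            (\<forall>y::nat \<Rightarrow> real. nonzero_pt d y \<longrightarrow>
               mat_image (B y) = mat_kernel (A y) \<and> mat_image (A y) = mat_kernel (Q y))))))
   \<and>
   (\<forall>(d'::nat) (k'::nat) (m'::nat) (n'::nat) (A' :: (nat \<Rightarrow> complex) \<Rightarrow> complex mat).
     hom_symbol d' k' m' n' A' \<longrightarrow>
     (((\<exists>r'::nat. \<forall>x'::nat \<Rightarrow> complex. nonzero_pt d' x' \<longrightarrow> vec_space.rank m' (A' x') = r')
        \<longleftrightarrow>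
       (\<exists>(p'::nat) (q'::nat) (kB'::nat) (kQ'::nat)
          (B' :: (nat \<Rightarrow> complex) \<Rightarrow> complex mat) (Q' :: (nat \<Rightarrow> complex) \<Rightarrow> complex mat).
          hom_symbol d' kB' n' p' B' \<and> hom_symbol d' kQ' q' m' Q' \<and>
          (\<forall>y'::nat \<Rightarrow> complex. nonzero_pt d' y' \<longrightarrow>
              mat_image (B' y') = mat_kernel (A' y') \<and> mat_image (A' y') = mat_kernel (Q' y'))))
      \<and>
      (\<forall>r'::nat. (\<forall>x'::nat \<Rightarrow> complex. nonzero_pt d' x' \<longrightarrow> vec_space.rank m' (A' x') = r') \<longrightarrow>
         (\<exists>(p'::nat) (q'::nat)
            (B' :: (nat \<Rightarrow> complex) \<Rightarrow> complex mat) (Q' :: (nat \<Rightarrow> complex) \<Rightarrow> complex mat).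
            hom_symbol d' (r' * k') n' p' B' \<and> hom_symbol d' (r' * k') q' m' Q' \<and>
            (\<forall>y'::nat \<Rightarrow> complex. nonzero_pt d' y' \<longrightarrow>
               mat_image (B' y') = mat_kernel (A' y') \<and> mat_image (A' y') = mat_kernel (Q' y'))))))"
    by (rule conjI[OF main_generic main_generic])

end
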